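(* Let $\mathbb{T}=(T,\eta,(\cdot)^\sharp)$ be a Kleene monad on a category $\mathbf{C}$. 1. If $\mathbf{C}$ is cartesian closed and $S$ is an object of $\mathbf{C}$, then the state monad transform $T_S X=(T(X\times S))^S$ is a Kleene monad, where the Kleisli category of $T_S$ is identified with the full subcategory of the Kleisli category of $\mathbb{T}$ on the objects of the form $X\times S$ (via $\mathbf{C}(X,(T(Y\times S))^S)\cong\mathbf{C}(X\times S,T(Y\times S))$), and joins, $\bot$ and Kleene star are inherited from the Kleisli category of $\mathbb{T}$. 2. Suppose $\mathbf{C}$ has finite products, $\mathbb{T}$ is strong with strength $\tau_{X,Y}:X\times TY\to T(X\times Y)$, and $(M,\varepsilon:1\to M,\bullet:M\times M\to M)$ is a monoid object in $\mathbf{C}$. Suppose the strength respects the Kleene monad structure, i.e. for all $f,g:Y\to TY'$ and $k:Y\to TY$ and every object $X$: $\tau\circ(\mathrm{id}_X\times\bot)=\bot$, $\tau\circ(\mathrm{id}_X\times(f\lor g))=\tau\circ(\mathrm{id}_X\times f)\lor\tau\circ(\mathrm{id}_X\times g)$, and $\tau\circ(\mathrm{id}_X\times k^\ast)=(\tau\circ(\mathrm{id}_X\times k))^\ast$ (stars and joins taken in the Kleisli category of $\mathbb{T}$). Then the writer monad transform $T_M X=T(M\times X)$ is a Kleene monad, where: for $f:X\to T(M\times Y)$ one sets $f^\circ:M\times X\to T(M\times Y)$ to be the composite $M\times X\xrightarrow{\tau\circ(\mathrm{id}\times f)}T(M\times(M\times Y))\cong T((M\times M)\times Y)\xrightarrow{T(\bullet\times\mathrm{id})}T(M\times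 Y)$; the unit of $T_M$ is $\eta\circ\langle\varepsilon\circ !,\mathrm{id}\rangle$; the Kleisli composite of $f:X\to T(M\times Y)$ followed by $g:Y\to T(M\times Z)$ is $(g^\circ)^\sharp\circ f$; joins and $\bot$ on $\mathbf{C}(X,T(M\times Y))$ are those of the Kleisli category of $\mathbb{T}$; and the Kleene star of $f:X\to T(M\times X)$ is $(f^\circ)^\ast\circ\eta\circ\langle\varepsilon\circ !,\mathrm{id}\rangle$ (star taken in the Kleisli category of $\mathbb{T}$).
   Context: Monads are given as Kleisli triples $(T,\eta,(\cdot)^\sharp)$ where $f:X\to TY$ is sent to $f^\sharp:TX\to TY$; the Kleisli category has morphisms $X\to TY$, identity $\eta$, and composition $g\cdot f=g^\sharp\circ f$. A Kleene-Kozen category is a category whose hom-sets are join-semilattices with least element $\bot$, with composition preserving binary joins and $\bot$ in each argument, together with an operator $(\cdot)^\ast:\mathbf{C}(X,X)\to\mathbf{C}(X,X)$ such that for all $f:Y\to Y$, $g:Y\to Z$, $h:X\to Y$: $g\circ f^\ast$ is the least prefixpoint of $x\mapsto g\lor x\circ f$ and $f^\ast\circ h$ is the least prefixpoint of $x\mapsto h\lor f\circ x$ (order: $f\le g\iff f\lor g=g$). A monad $\mathbb{T}$ is a Kleene monad if its Kleisli category is a Kleene-Kozen category. The terminal morphism is denoted $!$, pairing by $\langle\cdot,\cdot\rangle$. *)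

theory Defs
  imports Main
begin

section \<open>Categories with object-indexed operations\<close>

text \<open>A category is given by hom-sets indexed by pairs of objects, a composition
indexed by three objects, and identities. (Hom-sets of distinct pairs of objects
may share elements, since all operations are indexed by the objects.)\<close>

record ('o, 'a) cat =
  cHom :: "'o \<Rightarrow> 'o \<Rightarrow> 'a set"
  cCmp :: "'o \<Rightarrow> 'o \<Rightarrow> 'o \<Rightarrow> 'a \<Rightarrow> 'a \<Rightarrow> 'a"   (* cCmp X Y Z g f = g o f for f:X->Y, g:Y->Z *)
  cId  :: "'o \<Rightarrow> 'a"

definition is_category :: "('o, 'a, 'z) cat_scheme \<Rightarrow> bool" where
  "is_category C \<longleftrightarrow>
     (\<forall>X. cId C X \<in> cHom C X X) \<and>
     (\<forall>X Y Z f g. f \<in> cHom C X Y \<longrightarrow> g \<in> cHom C Y Z \<longrightarrow> cCmp C X Y Z g f \<in> cHom C X Z) \<and>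
     (\<forall>X Y f. f \<in> cHom C X Y \<longrightarrow> cCmp C X Y Y (cId C Y) f = f \<and> cCmp C X X Y f (cId C X) = f) \<and>
     (\<forall>W X Y Z f g h. f \<in> cHom C W X \<longrightarrow> g \<in> cHom C X Y \<longrightarrow> h \<in> cHom C Y Z \<longrightarrow>
        cCmp C W Y Z h (cCmp C W X Y g f) = cCmp C W X Z (cCmp C X Y Z h g) f)"

section \<open>Kleene-Kozen categories\<close>

record ('o, 'a) kk = "('o, 'a) cat" +
  kJoin :: "'o \<Rightarrow> 'o \<Rightarrow> 'a \<Rightarrow> 'a \<Rightarrow> 'a"
  kBot  :: "'o \<Rightarrow> 'o \<Rightarrow> 'a"
  kStar :: "'o \<Rightarrow> 'a \<Rightarrow> 'a"

definition kk_le :: "('o, 'a, 'z) kk_scheme \<Rightarrow> 'o \<Rightarrow> 'o \<Rightarrow> 'a \<Rightarrow> 'a \<Rightarrow> bool" where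
  "kk_le K X Y f g \<longleftrightarrow> kJoin K X Y f g = g"

definition least_prefixpoint ::
  "('o, 'a, 'z) kk_scheme \<Rightarrow> 'o \<Rightarrow> 'o \<Rightarrow> ('a \<Rightarrow> 'a) \<Rightarrow> 'a \<Rightarrow> bool" where
  "least_prefixpoint K X Y F p \<longleftrightarrow>
     p \<in> cHom K X Y \<and> kk_le K X Y (F p) p \<and>
     (\<forall>x \<in> cHom K X Y. kk_le K X Y (F x) x \<longrightarrow> kk_le K X Y p x)"

definition is_kk_category :: "('o, 'a, 'z) kk_scheme \<Rightarrow> bool" where
  "is_kk_category K \<longleftrightarrow>
     is_category K \<and>
     \<comment> \<open>hom-sets are join-semilattices with least element\<close>
     (\<forall>X Y f g. f \<in> cHom K X Y \<longrightarrow> g \<in> cHom K X Y \<longrightarrow> kJoin K X Y f g \<in> cHom K X Y) \<and>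
     (\<forall>X Y f g h. f \<in> cHom K X Y \<longrightarrow> g \<in> cHom K X Y \<longrightarrow> h \<in> cHom K X Y \<longrightarrow>
        kJoin K X Y (kJoin K X Y f g) h = kJoin K X Y f (kJoin K X Y g h)) \<and>
     (\<forall>X Y f g. f \<in> cHom K X Y \<longrightarrow> g \<in> cHom K X Y \<longrightarrow> kJoin K X Y f g = kJoin K X Y g f) \<and>
     (\<forall>X Y f. f \<in> cHom K X Y \<longrightarrow> kJoin K X Y f f = f) \<and>
     (\<forall>X Y. kBot K X Y \<in> cHom K X Y) \<and>
     (\<forall>X Y f. f \<in> cHom K X Y \<longrightarrow> kJoin K X Y (kBot K X Y) f = f) \<and>
     \<comment> \<open>composition preserves binary joins and bottom in each argument\<close>
     (\<forall>X Y Z f g h. f \<in> cHom K X Y \<longrightarrow> g \<in> cHom K Y Z \<longrightarrow> h \<in> cHom K Y Z \<longrightarrow>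
        cCmp K X Y Z (kJoin K Y Z g h) f = kJoin K X Z (cCmp K X Y Z g f) (cCmp K X Y Z h f)) \<and>
     (\<forall>X Y Z f. f \<in> cHom K X Y \<longrightarrow> cCmp K X Y Z (kBot K Y Z) f = kBot K X Z) \<and>
     (\<forall>X Y Z f h g. f \<in> cHom K X Y \<longrightarrow> h \<in> cHom K X Y \<longrightarrow> g \<in> cHom K Y Z \<longrightarrow>
        cCmp K X Y Z g (kJoin K X Y f h) = kJoin K X Z (cCmp K X Y Z g f) (cCmp K X Y Z g h)) \<and>
     (\<forall>X Y Z g. g \<in> cHom K Y Z \<longrightarrow> cCmp K X Y Z g (kBot K X Y) = kBot K X Z) \<and>
     \<comment> \<open>the star operator\<close>
     (\<forall>X f. f \<in> cHom K X X \<longrightarrow> kStar K X f \<in> cHom K X X) \<and>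
     (\<forall>Y Z f g. f \<in> cHom K Y Y \<longrightarrow> g \<in> cHom K Y Z \<longrightarrow>
        least_prefixpoint K Y Z (\<lambda>x. kJoin K Y Z g (cCmp K Y Y Z x f)) (cCmp K Y Y Z g (kStar K Y f))) \<and>
     (\<forall>X Y f h. f \<in> cHom K Y Y \<longrightarrow> h \<in> cHom K X Y \<longrightarrow>
        least_prefixpoint K X Y (\<lambda>x. kJoin K X Y h (cCmp K X Y Y f x)) (cCmp K X Y Y (kStar K Y f) h))"

section \<open>Kleisli triples and Kleene monads\<close>

definition is_kleisli_triple ::
  "('o, 'a) cat \<Rightarrow> ('o \<Rightarrow> 'o) \<Rightarrow> ('o \<Rightarrow> 'a) \<Rightarrow> ('o \<Rightarrow> 'o \<Rightarrow> 'a \<Rightarrow> 'a) \<Rightarrow> bool" where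
  "is_kleisli_triple C T eta ext \<longleftrightarrow>
     (\<forall>X. eta X \<in> cHom C X (T X)) \<and>
     (\<forall>X Y f. f \<in> cHom C X (T Y) \<longrightarrow> ext X Y f \<in> cHom C (T X) (T Y)) \<and>
     (\<forall>X. ext X X (eta X) = cId C (T X)) \<and>
     (\<forall>X Y f. f \<in> cHom C X (T Y) \<longrightarrow> cCmp C X (T X) (T Y) (ext X Y f) (eta X) = f) \<and>
     (\<forall>X Y Z f g. f \<in> cHom C X (T Y) \<longrightarrow> g \<in> cHom C Y (T Z) \<longrightarrow>
        ext X Z (cCmp C X (T Y) (T Z) (ext Y Z g) f)
          = cCmp C (T X) (T Y) (T Z) (ext Y Z g) (ext X Y f))"

definition kleisli_kk ::
  "('o, 'a) cat \<Rightarrow> ('o \<Rightarrow> 'o) \<Rightarrow> ('o \<Rightarrow> 'a) \<Rightarrow> ('o \<Rightarrow> 'o \<Rightarrow> 'a \<Rightarrow> 'a) \<Rightarrow>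
   ('o \<Rightarrow> 'o \<Rightarrow> 'a \<Rightarrow> 'a \<Rightarrow> 'a) \<Rightarrow> ('o \<Rightarrow> 'o \<Rightarrow> 'a) \<Rightarrow> ('o \<Rightarrow> 'a \<Rightarrow> 'a) \<Rightarrow> ('o, 'a) kk" where
  "kleisli_kk C T eta ext J B St =
     \<lparr> cHom = (\<lambda>X Y. cHom C X (T Y)),
       cCmp = (\<lambda>X Y Z g f. cCmp C X (T Y) (T Z) (ext Y Z g) f),
       cId = eta,
       kJoin = J, kBot = B, kStar = St \<rparr>"

definition kleene_monad ::
  "('o, 'a) cat \<Rightarrow> ('o \<Rightarrow> 'o) \<Rightarrow> ('o \<Rightarrow> 'a) \<Rightarrow> ('o \<Rightarrow> 'o \<Rightarrow> 'a \<Rightarrow> 'a) \<Rightarrow>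
   ('o \<Rightarrow> 'o \<Rightarrow> 'a \<Rightarrow> 'a \<Rightarrow> 'a) \<Rightarrow> ('o \<Rightarrow> 'o \<Rightarrow> 'a) \<Rightarrow> ('o \<Rightarrow> 'a \<Rightarrow> 'a) \<Rightarrow> bool" where
  "kleene_monad C T eta ext J B St \<longleftrightarrow>
     is_category C \<and> is_kleisli_triple C T eta ext \<and> is_kk_category (kleisli_kk C T eta ext J B St)"

definition Tmap ::
  "('o, 'a) cat \<Rightarrow> ('o \<Rightarrow> 'o) \<Rightarrow> ('o \<Rightarrow> 'a) \<Rightarrow> ('o \<Rightarrow> 'o \<Rightarrow> 'a \<Rightarrow> 'a) \<Rightarrow> 'o \<Rightarrow> 'o \<Rightarrow> 'a \<Rightarrow> 'a" where
  "Tmap C T eta ext X Y f = ext X Y (cCmp C X Y (T Y) (eta Y) f)"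

section \<open>Finite products and cartesian closure\<close>

record ('o, 'a) cart =
  pOne  :: 'o
  pTrm  :: "'o \<Rightarrow> 'a"
  pPrd  :: "'o \<Rightarrow> 'o \<Rightarrow> 'o"
  pPi1  :: "'o \<Rightarrow> 'o \<Rightarrow> 'a"
  pPi2  :: "'o \<Rightarrow> 'o \<Rightarrow> 'a"
  pPair :: "'o \<Rightarrow> 'o \<Rightarrow> 'o \<Rightarrow> 'a \<Rightarrow> 'a \<Rightarrow> 'a"

definition has_finite_products :: "('o, 'a) cat \<Rightarrow> ('o, 'a) cart \<Rightarrow> bool" where
  "has_finite_products C P \<longleftrightarrow>
     (\<forall>X. pTrm P X \<in> cHom C X (pOne P)) \<and>
     (\<forall>X f. f \<in> cHom C X (pOne P) \<longrightarrow> f = pTrm P X) \<and>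
     (\<forall>X Y. pPi1 P X Y \<in> cHom C (pPrd P X Y) X \<and> pPi2 P X Y \<in> cHom C (pPrd P X Y) Y) \<and>
     (\<forall>Z X Y f g. f \<in> cHom C Z X \<longrightarrow> g \<in> cHom C Z Y \<longrightarrow>
        pPair P Z X Y f g \<in> cHom C Z (pPrd P X Y) \<and>
        cCmp C Z (pPrd P X Y) X (pPi1 P X Y) (pPair P Z X Y f g) = f \<and>
        cCmp C Z (pPrd P X Y) Y (pPi2 P X Y) (pPair P Z X Y f g) = g) \<and>
     (\<forall>Z X Y h. h \<in> cHom C Z (pPrd P X Y) \<longrightarrow>
        pPair P Z X Y (cCmp C Z (pPrd P X Y) X (pPi1 P X Y) h)
                      (cCmp C Z (pPrd P X Y) Y (pPi2 P X Y) h) = h)"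

definition cross ::
  "('o, 'a) cat \<Rightarrow> ('o, 'a) cart \<Rightarrow> 'o \<Rightarrow> 'o \<Rightarrow> 'o \<Rightarrow> 'o \<Rightarrow> 'a \<Rightarrow> 'a \<Rightarrow> 'a" where
  "cross C P X Y X' Y' f g =
     pPair P (pPrd P X Y) X' Y'
       (cCmp C (pPrd P X Y) X X' f (pPi1 P X Y))
       (cCmp C (pPrd P X Y) Y Y' g (pPi2 P X Y))"

definition assoc_r :: "('o, 'a) cat \<Rightarrow> ('o, 'a) cart \<Rightarrow> 'o \<Rightarrow> 'o \<Rightarrow> 'o \<Rightarrow> 'a" where
  "assoc_r C P X Y Z =
     (let XY = pPrd P X Y; A = pPrd P XY Z in
      pPair P A X (pPrd P Y Z)
        (cCmp C A XY X (pPi1 P X Y) (pPi1 P XY Z))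
        (pPair P A Y Z (cCmp C A XY Y (pPi2 P X Y) (pPi1 P XY Z)) (pPi2 P XY Z)))"

definition assoc_l :: "('o, 'a) cat \<Rightarrow> ('o, 'a) cart \<Rightarrow> 'o \<Rightarrow> 'o \<Rightarrow> 'o \<Rightarrow> 'a" where
  "assoc_l C P X Y Z =
     (let YZ = pPrd P Y Z; A = pPrd P X YZ in
      pPair P A (pPrd P X Y) Z
        (pPair P A X Y (pPi1 P X YZ) (cCmp C A YZ Y (pPi1 P Y Z) (pPi2 P X YZ)))
        (cCmp C A YZ Z (pPi2 P Y Z) (pPi2 P X YZ)))"

record ('o, 'a) expo =
  eExp :: "'o \<Rightarrow> 'o \<Rightarrow> 'o"                  (* eExp S B = B^S *)
  eEv  :: "'o \<Rightarrow> 'o \<Rightarrow> 'a"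
  eCur :: "'o \<Rightarrow> 'o \<Rightarrow> 'o \<Rightarrow> 'a \<Rightarrow> 'a"

definition is_ccc :: "('o, 'a) cat \<Rightarrow> ('o, 'a) cart \<Rightarrow> ('o, 'a) expo \<Rightarrow> bool" where
  "is_ccc C P E \<longleftrightarrow>
     has_finite_products C P \<and>
     (\<forall>S B. eEv E S B \<in> cHom C (pPrd P (eExp E S B) S) B) \<and>
     (\<forall>A S B h. h \<in> cHom C (pPrd P A S) B \<longrightarrow>
        eCur E A S B h \<in> cHom C A (eExp E S B) \<and>
        cCmp C (pPrd P A S) (pPrd P (eExp E S B) S) B (eEv E S B)
          (cross C P A S (eExp E S B) S (eCur E A S B h) (cId C S)) = h) \<and>
     (\<forall>A S B k. k \<in> cHom C A (eExp E S B) \<longrightarrow>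
        eCur E A S B (cCmp C (pPrd P A S) (pPrd P (eExp E S B) S) B (eEv E S B)
          (cross C P A S (eExp E S B) S k (cId C S))) = k)"

definition uncur :: "('o, 'a) cat \<Rightarrow> ('o, 'a) cart \<Rightarrow> ('o, 'a) expo \<Rightarrow> 'o \<Rightarrow> 'o \<Rightarrow> 'o \<Rightarrow> 'a \<Rightarrow> 'a" where
  "uncur C P E A S B k =
     cCmp C (pPrd P A S) (pPrd P (eExp E S B) S) B (eEv E S B)
       (cross C P A S (eExp E S B) S k (cId C S))"

section \<open>State monad transform T_S X = (T(X x S))^S\<close>

definition stT :: "('o, 'a) cart \<Rightarrow> ('o, 'a) expo \<Rightarrow> ('o \<Rightarrow> 'o) \<Rightarrow> 'o \<Rightarrow> 'o \<Rightarrow> 'o" where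
  "stT P E T S X = eExp E S (T (pPrd P X S))"

definition stEta :: "('o, 'a) cart \<Rightarrow> ('o, 'a) expo \<Rightarrow> ('o \<Rightarrow> 'o) \<Rightarrow> ('o \<Rightarrow> 'a) \<Rightarrow> 'o \<Rightarrow> 'o \<Rightarrow> 'a" where
  "stEta P E T eta S X = eCur E X S (T (pPrd P X S)) (eta (pPrd P X S))"

definition stExt ::
  "('o, 'a) cat \<Rightarrow> ('o, 'a) cart \<Rightarrow> ('o, 'a) expo \<Rightarrow> ('o \<Rightarrow> 'o) \<Rightarrow> ('o \<Rightarrow> 'o \<Rightarrow> 'a \<Rightarrow> 'a) \<Rightarrow>
   'o \<Rightarrow> 'o \<Rightarrow> 'o \<Rightarrow> 'a \<Rightarrow> 'a" where
  "stExt C P E T ext S X Y f =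
     (let XS = pPrd P X S; YS = pPrd P Y S; TSX = stT P E T S X in
      eCur E TSX S (T YS)
        (cCmp C (pPrd P TSX S) (T XS) (T YS)
           (ext XS YS (uncur C P E X S (T YS) f))
           (eEv E S (T XS))))"

definition stJoin ::
  "('o, 'a) cat \<Rightarrow> ('o, 'a) cart \<Rightarrow> ('o, 'a) expo \<Rightarrow> ('o \<Rightarrow> 'o) \<Rightarrow> ('o \<Rightarrow> 'o \<Rightarrow> 'a \<Rightarrow> 'a \<Rightarrow> 'a) \<Rightarrow>
   'o \<Rightarrow> 'o \<Rightarrow> 'o \<Rightarrow> 'a \<Rightarrow> 'a \<Rightarrow> 'a" where
  "stJoin C P E T J S X Y f g =
     eCur E X S (T (pPrd P Y S))
       (J (pPrd P X S) (pPrd P Y S) (uncur C P E X S (T (pPrd P Y S)) f)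
                                    (uncur C P E X S (T (pPrd P Y S)) g))"

definition stBot ::
  "('o, 'a) cart \<Rightarrow> ('o, 'a) expo \<Rightarrow> ('o \<Rightarrow> 'o) \<Rightarrow> ('o \<Rightarrow> 'o \<Rightarrow> 'a) \<Rightarrow> 'o \<Rightarrow> 'o \<Rightarrow> 'o \<Rightarrow> 'a" where
  "stBot P E T B S X Y = eCur E X S (T (pPrd P Y S)) (B (pPrd P X S) (pPrd P Y S))"

definition stStar ::
  "('o, 'a) cat \<Rightarrow> ('o, 'a) cart \<Rightarrow> ('o, 'a) expo \<Rightarrow> ('o \<Rightarrow> 'o) \<Rightarrow> ('o \<Rightarrow> 'a \<Rightarrow> 'a) \<Rightarrow>
   'o \<Rightarrow> 'o \<Rightarrow> 'a \<Rightarrow> 'a" where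
  "stStar C P E T St S X f =
     eCur E X S (T (pPrd P X S)) (St (pPrd P X S) (uncur C P E X S (T (pPrd P X S)) f))"

section \<open>Strong monads and monoid objects\<close>

definition is_strength ::
  "('o, 'a) cat \<Rightarrow> ('o, 'a) cart \<Rightarrow> ('o \<Rightarrow> 'o) \<Rightarrow> ('o \<Rightarrow> 'a) \<Rightarrow> ('o \<Rightarrow> 'o \<Rightarrow> 'a \<Rightarrow> 'a) \<Rightarrow>
   ('o \<Rightarrow> 'o \<Rightarrow> 'a) \<Rightarrow> bool" where
  "is_strength C P T eta ext tau \<longleftrightarrow>
     (\<forall>X Y. tau X Y \<in> cHom C (pPrd P X (T Y)) (T (pPrd P X Y))) \<and>
     \<comment> \<open>naturality\<close>
     (\<forall>X Y X' Y' f g. f \<in> cHom C X X' \<longrightarrow> g \<in> cHom C Y Y' \<longrightarrow>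
        cCmp C (pPrd P X (T Y)) (T (pPrd P X Y)) (T (pPrd P X' Y'))
          (Tmap C T eta ext (pPrd P X Y) (pPrd P X' Y') (cross C P X Y X' Y' f g)) (tau X Y)
        = cCmp C (pPrd P X (T Y)) (pPrd P X' (T Y')) (T (pPrd P X' Y'))
          (tau X' Y') (cross C P X (T Y) X' (T Y') f (Tmap C T eta ext Y Y' g))) \<and>
     \<comment> \<open>unit: T(pi2) o tau_{1,Y} = pi2\<close>
     (\<forall>Y. cCmp C (pPrd P (pOne P) (T Y)) (T (pPrd P (pOne P) Y)) (T Y)
            (Tmap C T eta ext (pPrd P (pOne P) Y) Y (pPi2 P (pOne P) Y)) (tau (pOne P) Y)
          = pPi2 P (pOne P) (T Y)) \<and>
     \<comment> \<open>associativity: T(alpha) o tau_{X x Y, Z} = tau_{X, Y x Z} o (id x tau_{Y,Z}) o alpha\<close>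
     (\<forall>X Y Z.
        cCmp C (pPrd P (pPrd P X Y) (T Z)) (T (pPrd P (pPrd P X Y) Z)) (T (pPrd P X (pPrd P Y Z)))
          (Tmap C T eta ext (pPrd P (pPrd P X Y) Z) (pPrd P X (pPrd P Y Z)) (assoc_r C P X Y Z))
          (tau (pPrd P X Y) Z)
        = cCmp C (pPrd P (pPrd P X Y) (T Z)) (pPrd P X (T (pPrd P Y Z))) (T (pPrd P X (pPrd P Y Z)))
            (tau X (pPrd P Y Z))
            (cCmp C (pPrd P (pPrd P X Y) (T Z)) (pPrd P X (pPrd P Y (T Z))) (pPrd P X (T (pPrd P Y Z)))
               (cross C P X (pPrd P Y (T Z)) X (T (pPrd P Y Z)) (cId C X) (tau Y Z))
               (assoc_r C P X Y (T Z)))) \<and>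
     \<comment> \<open>compatibility with the unit\<close>
     (\<forall>X Y. cCmp C (pPrd P X Y) (pPrd P X (T Y)) (T (pPrd P X Y))
              (tau X Y) (cross C P X Y X (T Y) (cId C X) (eta Y))
            = eta (pPrd P X Y)) \<and>
     \<comment> \<open>compatibility with extension\<close>
     (\<forall>X Y Z f. f \<in> cHom C Y (T Z) \<longrightarrow>
        cCmp C (pPrd P X (T Y)) (pPrd P X (T Z)) (T (pPrd P X Z))
          (tau X Z) (cross C P X (T Y) X (T Z) (cId C X) (ext Y Z f))
        = cCmp C (pPrd P X (T Y)) (T (pPrd P X Y)) (T (pPrd P X Z))
            (ext (pPrd P X Y) (pPrd P X Z)
               (cCmp C (pPrd P X Y) (pPrd P X (T Z)) (T (pPrd P X Z))
                  (tau X Z) (cross C P X Y X (T Z) (cId C X) f)))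
            (tau X Y))"

definition is_monoid_object ::
  "('o, 'a) cat \<Rightarrow> ('o, 'a) cart \<Rightarrow> 'o \<Rightarrow> 'a \<Rightarrow> 'a \<Rightarrow> bool" where
  "is_monoid_object C P M e m \<longleftrightarrow>
     e \<in> cHom C (pOne P) M \<and> m \<in> cHom C (pPrd P M M) M \<and>
     cCmp C M (pPrd P M M) M m
       (pPair P M M M (cCmp C M (pOne P) M e (pTrm P M)) (cId C M)) = cId C M \<and>
     cCmp C M (pPrd P M M) M m
       (pPair P M M M (cId C M) (cCmp C M (pOne P) M e (pTrm P M))) = cId C M \<and>
     cCmp C (pPrd P (pPrd P M M) M) (pPrd P M M) M m
       (cross C P (pPrd P M M) M M M m (cId C M))
     = cCmp C (pPrd P (pPrd P M M) M) (pPrd P M M) M m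
         (cCmp C (pPrd P (pPrd P M M) M) (pPrd P M (pPrd P M M)) (pPrd P M M)
            (cross C P M (pPrd P M M) M M (cId C M) m) (assoc_r C P M M M))"

definition strength_respects_kleene ::
  "('o, 'a) cat \<Rightarrow> ('o, 'a) cart \<Rightarrow> ('o \<Rightarrow> 'o) \<Rightarrow> ('o \<Rightarrow> 'o \<Rightarrow> 'a) \<Rightarrow>
   ('o \<Rightarrow> 'o \<Rightarrow> 'a \<Rightarrow> 'a \<Rightarrow> 'a) \<Rightarrow> ('o \<Rightarrow> 'o \<Rightarrow> 'a) \<Rightarrow> ('o \<Rightarrow> 'a \<Rightarrow> 'a) \<Rightarrow> bool" where
  "strength_respects_kleene C P T tau J B St \<longleftrightarrow>
     (\<forall>X Y Y'.
        cCmp C (pPrd P X Y) (pPrd P X (T Y')) (T (pPrd P X Y'))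
          (tau X Y') (cross C P X Y X (T Y') (cId C X) (B Y Y'))
        = B (pPrd P X Y) (pPrd P X Y')) \<and>
     (\<forall>X Y Y' f g. f \<in> cHom C Y (T Y') \<longrightarrow> g \<in> cHom C Y (T Y') \<longrightarrow>
        cCmp C (pPrd P X Y) (pPrd P X (T Y')) (T (pPrd P X Y'))
          (tau X Y') (cross C P X Y X (T Y') (cId C X) (J Y Y' f g))
        = J (pPrd P X Y) (pPrd P X Y')
            (cCmp C (pPrd P X Y) (pPrd P X (T Y')) (T (pPrd P X Y'))
               (tau X Y') (cross C P X Y X (T Y') (cId C X) f))
            (cCmp C (pPrd P X Y) (pPrd P X (T Y')) (T (pPrd P X Y'))
               (tau X Y') (cross C P X Y X (T Y') (cId C X) g))) \<and>
     (\<forall>X Y k. k \<in> cHom C Y (T Y) \<longrightarrow>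
        cCmp C (pPrd P X Y) (pPrd P X (T Y)) (T (pPrd P X Y))
          (tau X Y) (cross C P X Y X (T Y) (cId C X) (St Y k))
        = St (pPrd P X Y)
            (cCmp C (pPrd P X Y) (pPrd P X (T Y)) (T (pPrd P X Y))
               (tau X Y) (cross C P X Y X (T Y) (cId C X) k)))"

section \<open>Writer monad transform T_M X = T(M x X)\<close>

definition wrT :: "('o, 'a) cart \<Rightarrow> ('o \<Rightarrow> 'o) \<Rightarrow> 'o \<Rightarrow> 'o \<Rightarrow> 'o" where
  "wrT P T M X = T (pPrd P M X)"

definition wrCirc ::
  "('o, 'a) cat \<Rightarrow> ('o, 'a) cart \<Rightarrow> ('o \<Rightarrow> 'o) \<Rightarrow> ('o \<Rightarrow> 'a) \<Rightarrow> ('o \<Rightarrow> 'o \<Rightarrow> 'a \<Rightarrow> 'a) \<Rightarrow>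
   ('o \<Rightarrow> 'o \<Rightarrow> 'a) \<Rightarrow> 'o \<Rightarrow> 'a \<Rightarrow> 'o \<Rightarrow> 'o \<Rightarrow> 'a \<Rightarrow> 'a" where
  "wrCirc C P T eta ext tau M m X Y f =
     (let MY = pPrd P M Y; MMY = pPrd P M MY; MM_Y = pPrd P (pPrd P M M) Y;
          MX = pPrd P M X; MTMY = pPrd P M (T MY) in
      cCmp C MX (T MM_Y) (T MY)
        (Tmap C T eta ext MM_Y MY (cross C P (pPrd P M M) Y M Y m (cId C Y)))
        (cCmp C MX (T MMY) (T MM_Y)
           (Tmap C T eta ext MMY MM_Y (assoc_l C P M M Y))
           (cCmp C MX MTMY (T MMY)
              (tau M MY)
              (cross C P M X M (T MY) (cId C M) f))))"

definition wrEta ::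
  "('o, 'a) cat \<Rightarrow> ('o, 'a) cart \<Rightarrow> ('o \<Rightarrow> 'o) \<Rightarrow> ('o \<Rightarrow> 'a) \<Rightarrow> 'o \<Rightarrow> 'a \<Rightarrow> 'o \<Rightarrow> 'a" where
  "wrEta C P T eta M e X =
     cCmp C X (pPrd P M X) (T (pPrd P M X)) (eta (pPrd P M X))
       (pPair P X M X (cCmp C X (pOne P) M e (pTrm P X)) (cId C X))"

definition wrExt ::
  "('o, 'a) cat \<Rightarrow> ('o, 'a) cart \<Rightarrow> ('o \<Rightarrow> 'o) \<Rightarrow> ('o \<Rightarrow> 'a) \<Rightarrow> ('o \<Rightarrow> 'o \<Rightarrow> 'a \<Rightarrow> 'a) \<Rightarrow>
   ('o \<Rightarrow> 'o \<Rightarrow> 'a) \<Rightarrow> 'o \<Rightarrow> 'a \<Rightarrow> 'o \<Rightarrow> 'o \<Rightarrow> 'a \<Rightarrow> 'a" where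
  "wrExt C P T eta ext tau M m X Y f =
     ext (pPrd P M X) (pPrd P M Y) (wrCirc C P T eta ext tau M m X Y f)"

definition wrJoin :: "('o, 'a) cart \<Rightarrow> ('o \<Rightarrow> 'o \<Rightarrow> 'a \<Rightarrow> 'a \<Rightarrow> 'a) \<Rightarrow> 'o \<Rightarrow> 'o \<Rightarrow> 'o \<Rightarrow> 'a \<Rightarrow> 'a \<Rightarrow> 'a" where
  "wrJoin P J M X Y f g = J X (pPrd P M Y) f g"

definition wrBot :: "('o, 'a) cart \<Rightarrow> ('o \<Rightarrow> 'o \<Rightarrow> 'a) \<Rightarrow> 'o \<Rightarrow> 'o \<Rightarrow> 'o \<Rightarrow> 'a" where
  "wrBot P B M X Y = B X (pPrd P M Y)"

definition wrStar ::
  "('o, 'a) cat \<Rightarrow> ('o, 'a) cart \<Rightarrow> ('o \<Rightarrow> 'o) \<Rightarrow> ('o \<Rightarrow> 'a) \<Rightarrow> ('o \<Rightarrow> 'o \<Rightarrow> 'a \<Rightarrow> 'a) \<Rightarrow>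
   ('o \<Rightarrow> 'o \<Rightarrow> 'a) \<Rightarrow> ('o \<Rightarrow> 'a \<Rightarrow> 'a) \<Rightarrow> 'o \<Rightarrow> 'a \<Rightarrow> 'a \<Rightarrow> 'o \<Rightarrow> 'a \<Rightarrow> 'a" where
  "wrStar C P T eta ext tau St M e m X f =
     cCmp C X (T (pPrd P M X)) (T (pPrd P M X))
       (ext (pPrd P M X) (pPrd P M X) (St (pPrd P M X) (wrCirc C P T eta ext tau M m X X f)))
       (wrEta C P T eta M e X)"

end

theory Submission
  imports Defs
begin


lemma kk_transfer:
  fixes K :: "('o,'a,'z) kk_scheme" and K' :: "('o,'a,'w) kk_scheme"
    and F :: "'o \<Rightarrow> 'o" and \<Phi> :: "'o \<Rightarrow> 'o \<Rightarrow> 'a \<Rightarrow> 'a"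
  assumes KK: "is_kk_category K"
    and hom: "\<And>X Y f. f \<in> cHom K' X Y \<Longrightarrow> \<Phi> X Y f \<in> cHom K (F X) (F Y)"
    and inj: "\<And>X Y f g. f \<in> cHom K' X Y \<Longrightarrow> g \<in> cHom K' X Y \<Longrightarrow> \<Phi> X Y f = \<Phi> X Y g \<Longrightarrow> f = g"
    and idh: "\<And>X. cId K' X \<in> cHom K' X X"
    and idp: "\<And>X. \<Phi> X X (cId K' X) = cId K (F X)"
    and cmph: "\<And>X Y Z f g. f \<in> cHom K' X Y \<Longrightarrow> g \<in> cHom K' Y Z \<Longrightarrow> cCmp K' X Y Z g f \<in> cHom K' X Z"
    and cmpp: "\<And>X Y Z f g. f \<in> cHom K' X Y \<Longrightarrow> g \<in> cHom K' Y Z \<Longrightarrow>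
        \<Phi> X Z (cCmp K' X Y Z g f) = cCmp K (F X) (F Y) (F Z) (\<Phi> Y Z g) (\<Phi> X Y f)"
    and joinh: "\<And>X Y f g. f \<in> cHom K' X Y \<Longrightarrow> g \<in> cHom K' X Y \<Longrightarrow> kJoin K' X Y f g \<in> cHom K' X Y"
    and joinp: "\<And>X Y f g. f \<in> cHom K' X Y \<Longrightarrow> g \<in> cHom K' X Y \<Longrightarrow>
        \<Phi> X Y (kJoin K' X Y f g) = kJoin K (F X) (F Y) (\<Phi> X Y f) (\<Phi> X Y g)"
    and both: "\<And>X Y. kBot K' X Y \<in> cHom K' X Y"
    and botp: "\<And>X Y. \<Phi> X Y (kBot K' X Y) = kBot K (F X) (F Y)"
    and starh: "\<And>X f. f \<in> cHom K' X X \<Longrightarrow> kStar K' X f \<in> cHom K' X X"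
    and starp: "\<And>X f. f \<in> cHom K' X X \<Longrightarrow> \<Phi> X X (kStar K' X f) = kStar K (F X) (\<Phi> X X f)"
  shows "is_kk_category K'"
proof -
  note K = KK[unfolded is_kk_category_def is_category_def]
  have leiff: "kk_le K' X Y f g \<longleftrightarrow> kk_le K (F X) (F Y) (\<Phi> X Y f) (\<Phi> X Y g)"
    if "f \<in> cHom K' X Y" "g \<in> cHom K' X Y" for X Y f g
    unfolding kk_le_def using that joinh joinp inj by metis
  have cat: "is_category K'"
    unfolding is_category_def
  proof (intro conjI allI impI)
    fix X show "cId K' X \<in> cHom K' X X" by (rule idh)
  next
    fix X Y Z f g assume "f \<in> cHom K' X Y" "g \<in> cHom K' Y Z"
    then show "cCmp K' X Y Z g f \<in> cHom K' X Z" by (rule cmph)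
  next
    fix X Y f assume f: "f \<in> cHom K' X Y"
    show "cCmp K' X Y Y (cId K' Y) f = f"
      by (rule inj[where X=X and Y=Y]) (use f K hom idh idp cmph cmpp in auto)
    show "cCmp K' X X Y f (cId K' X) = f"
      by (rule inj[where X=X and Y=Y]) (use f K hom idh idp cmph cmpp in auto)
  next
    fix W X Y Z f g h assume a: "f \<in> cHom K' W X" "g \<in> cHom K' X Y" "h \<in> cHom K' Y Z"
    show "cCmp K' W Y Z h (cCmp K' W X Y g f) = cCmp K' W X Z (cCmp K' X Y Z h g) f"
      by (rule inj[where X=W and Y=Z]) (use a K hom cmph cmpp in auto)
  qed
  show ?thesis
    unfolding is_kk_category_def
  proof (intro conjI allI impI cat)
    fix X Y f g assume "f \<in> cHom K' X Y" "g \<in> cHom K' X Y"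
    then show "kJoin K' X Y f g \<in> cHom K' X Y" by (rule joinh)
  next
    fix X Y f g h assume a: "f \<in> cHom K' X Y" "g \<in> cHom K' X Y" "h \<in> cHom K' X Y"
    show "kJoin K' X Y (kJoin K' X Y f g) h = kJoin K' X Y f (kJoin K' X Y g h)"
      by (rule inj[where X=X and Y=Y]) (use a K hom joinh joinp in auto)
  next
    fix X Y f g assume a: "f \<in> cHom K' X Y" "g \<in> cHom K' X Y"
    show "kJoin K' X Y f g = kJoin K' X Y g f"
      by (rule inj[where X=X and Y=Y]) (use a K hom joinh joinp in auto)
  next
    fix X Y f assume a: "f \<in> cHom K' X Y"
    show "kJoin K' X Y f f = f"
      by (rule inj[where X=X and Y=Y]) (use a K hom joinh joinp in auto)
  next
    fix X Y show "kBot K' X Y \<in> cHom K' X Y" by (rule both)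
  next
    fix X Y f assume a: "f \<in> cHom K' X Y"
    show "kJoin K' X Y (kBot K' X Y) f = f"
      by (rule inj[where X=X and Y=Y]) (use a K hom joinh joinp both botp in auto)
  next
    fix X Y Z f g h assume a: "f \<in> cHom K' X Y" "g \<in> cHom K' Y Z" "h \<in> cHom K' Y Z"
    show "cCmp K' X Y Z (kJoin K' Y Z g h) f = kJoin K' X Z (cCmp K' X Y Z g f) (cCmp K' X Y Z h f)"
      by (rule inj[where X=X and Y=Z]) (use a K hom joinh joinp cmph cmpp in auto)
  next
    fix X Y Z f assume a: "f \<in> cHom K' X Y"
    show "cCmp K' X Y Z (kBot K' Y Z) f = kBot K' X Z"
      by (rule inj[where X=X and Y=Z]) (use a K hom both botp cmph cmpp in auto)
  next
    fix X Y Z f h g assume a: "f \<in> cHom K' X Y" "h \<in> cHom K' X Y" "g \<in> cHom K' Y Z"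
    show "cCmp K' X Y Z g (kJoin K' X Y f h) = kJoin K' X Z (cCmp K' X Y Z g f) (cCmp K' X Y Z g h)"
      by (rule inj[where X=X and Y=Z]) (use a K hom joinh joinp cmph cmpp in auto)
  next
    fix X Y Z g assume a: "g \<in> cHom K' Y Z"
    show "cCmp K' X Y Z g (kBot K' X Y) = kBot K' X Z"
      by (rule inj[where X=X and Y=Z]) (use a K hom both botp cmph cmpp in auto)
  next
    fix X f assume "f \<in> cHom K' X X" then show "kStar K' X f \<in> cHom K' X X" by (rule starh)
  next
    fix Y Z f g assume f: "f \<in> cHom K' Y Y" and g: "g \<in> cHom K' Y Z"
    let ?p = "cCmp K' Y Y Z g (kStar K' Y f)"
    have ph: "?p \<in> cHom K' Y Z" using f g starh cmph by blast
    have L: "least_prefixpoint K (F Y) (F Z)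
        (\<lambda>x. kJoin K (F Y) (F Z) (\<Phi> Y Z g) (cCmp K (F Y) (F Y) (F Z) x (\<Phi> Y Y f)))
        (cCmp K (F Y) (F Y) (F Z) (\<Phi> Y Z g) (kStar K (F Y) (\<Phi> Y Y f)))"
      using KK hom[OF f] hom[OF g] unfolding is_kk_category_def by blast
    have pe: "\<Phi> Y Z ?p = cCmp K (F Y) (F Y) (F Z) (\<Phi> Y Z g) (kStar K (F Y) (\<Phi> Y Y f))"
      using f g starh starp cmpp by auto
    have Fe: "\<Phi> Y Z (kJoin K' Y Z g (cCmp K' Y Y Z x f)) =
        kJoin K (F Y) (F Z) (\<Phi> Y Z g) (cCmp K (F Y) (F Y) (F Z) (\<Phi> Y Z x) (\<Phi> Y Y f))"
      if "x \<in> cHom K' Y Z" for x using that f g cmph cmpp joinp by auto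
    have Fh: "kJoin K' Y Z g (cCmp K' Y Y Z x f) \<in> cHom K' Y Z" if "x \<in> cHom K' Y Z" for x
      using that f g cmph joinh by auto
    show "least_prefixpoint K' Y Z (\<lambda>x. kJoin K' Y Z g (cCmp K' Y Y Z x f)) ?p"
      unfolding least_prefixpoint_def
    proof (intro conjI ballI impI ph)
      show "kk_le K' Y Z (kJoin K' Y Z g (cCmp K' Y Y Z ?p f)) ?p"
        using L ph leiff[OF Fh[OF ph] ph] Fe[OF ph] pe unfolding least_prefixpoint_def by simp
    next
      fix x assume x: "x \<in> cHom K' Y Z" and le: "kk_le K' Y Z (kJoin K' Y Z g (cCmp K' Y Y Z x f)) x"
      have "kk_le K (F Y) (F Z) (kJoin K (F Y) (F Z) (\<Phi> Y Z g) (cCmp K (F Y) (F Y) (F Z) (\<Phi> Y Z x) (\<Phi> Y Y f))) (\<Phi> Y Z x)"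
        using le leiff[OF Fh[OF x] x] Fe[OF x] by simp
      then have "kk_le K (F Y) (F Z) (\<Phi> Y Z ?p) (\<Phi> Y Z x)"
        using L x hom pe unfolding least_prefixpoint_def by simp
      then show "kk_le K' Y Z ?p x" using leiff[OF ph x] by simp
    qed
  next
    fix X Y f h assume f: "f \<in> cHom K' Y Y" and h: "h \<in> cHom K' X Y"
    let ?p = "cCmp K' X Y Y (kStar K' Y f) h"
    have ph: "?p \<in> cHom K' X Y" using f h starh cmph by blast
    have L: "least_prefixpoint K (F X) (F Y)
        (\<lambda>x. kJoin K (F X) (F Y) (\<Phi> X Y h) (cCmp K (F X) (F Y) (F Y) (\<Phi> Y Y f) x))
        (cCmp K (F X) (F Y) (F Y) (kStar K (F Y) (\<Phi> Y Y f)) (\<Phi> X Y h))"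
      using KK hom[OF f] hom[OF h] unfolding is_kk_category_def by blast
    have pe: "\<Phi> X Y ?p = cCmp K (F X) (F Y) (F Y) (kStar K (F Y) (\<Phi> Y Y f)) (\<Phi> X Y h)"
      using f h starh starp cmpp by auto
    have Fe: "\<Phi> X Y (kJoin K' X Y h (cCmp K' X Y Y f x)) =
        kJoin K (F X) (F Y) (\<Phi> X Y h) (cCmp K (F X) (F Y) (F Y) (\<Phi> Y Y f) (\<Phi> X Y x))"
      if "x \<in> cHom K' X Y" for x using that f h cmph cmpp joinp by auto
    have Fh: "kJoin K' X Y h (cCmp K' X Y Y f x) \<in> cHom K' X Y" if "x \<in> cHom K' X Y" for x
      using that f h cmph joinh by auto
    show "least_prefixpoint K' X Y (\<lambda>x. kJoin K' X Y h (cCmp K' X Y Y f x)) ?p"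
      unfolding least_prefixpoint_def
    proof (intro conjI ballI impI ph)
      show "kk_le K' X Y (kJoin K' X Y h (cCmp K' X Y Y f ?p)) ?p"
        using L ph leiff[OF Fh[OF ph] ph] Fe[OF ph] pe unfolding least_prefixpoint_def by simp
    next
      fix x assume x: "x \<in> cHom K' X Y" and le: "kk_le K' X Y (kJoin K' X Y h (cCmp K' X Y Y f x)) x"
      have "kk_le K (F X) (F Y) (kJoin K (F X) (F Y) (\<Phi> X Y h) (cCmp K (F X) (F Y) (F Y) (\<Phi> Y Y f) (\<Phi> X Y x))) (\<Phi> X Y x)"
        using le leiff[OF Fh[OF x] x] Fe[OF x] by simp
      then have "kk_le K (F X) (F Y) (\<Phi> X Y ?p) (\<Phi> X Y x)"
        using L x hom pe unfolding least_prefixpoint_def by simp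
      then show "kk_le K' X Y ?p x" using leiff[OF ph x] by simp
    qed
  qed
qed




locale cp =
  fixes C :: "('o,'a) cat" and P :: "('o,'a) cart"
  assumes cat: "is_category C" and fp: "has_finite_products C P"
begin

abbreviation "hom \<equiv> cHom C"
abbreviation "cmp \<equiv> cCmp C"
abbreviation "idm \<equiv> cId C"
abbreviation "prd \<equiv> pPrd P"
abbreviation "p1 \<equiv> pPi1 P"
abbreviation "p2 \<equiv> pPi2 P"
abbreviation "pair \<equiv> pPair P"
abbreviation "trm \<equiv> pTrm P"
abbreviation "one \<equiv> pOne P"

lemma idh[simp]: "idm X \<in> hom X X" using cat unfolding is_category_def by blast
lemma cmph[simp]: "f \<in> hom X Y \<Longrightarrow> g \<in> hom Y Z \<Longrightarrow> cmp X Y Z g f \<in> hom X Z"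
  using cat unfolding is_category_def by blast
lemma idl[simp]: "f \<in> hom X Y \<Longrightarrow> cmp X Y Y (idm Y) f = f"
  using cat unfolding is_category_def by blast
lemma idr[simp]: "f \<in> hom X Y \<Longrightarrow> cmp X X Y f (idm X) = f"
  using cat unfolding is_category_def by blast
lemma assoc[simp]: "f \<in> hom W X \<Longrightarrow> g \<in> hom X Y \<Longrightarrow> h \<in> hom Y Z \<Longrightarrow>
   cmp W X Z (cmp X Y Z h g) f = cmp W Y Z h (cmp W X Y g f)"
  using cat unfolding is_category_def by metis

lemma p1h[simp]: "p1 X Y \<in> hom (prd X Y) X" using fp unfolding has_finite_products_def by blast
lemma p2h[simp]: "p2 X Y \<in> hom (prd X Y) Y" using fp unfolding has_finite_products_def by blast
lemma trmh[simp]: "trm X \<in> hom X one" using fp unfolding has_finite_products_def by blast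
lemma trm_uniq: "f \<in> hom X one \<Longrightarrow> f = trm X" using fp unfolding has_finite_products_def by blast
lemma trm_cmp[simp]: "f \<in> hom X Y \<Longrightarrow> cmp X Y one (trm Y) f = trm X"
  by (rule trm_uniq) simp
lemma pairh[simp]: "f \<in> hom Z X \<Longrightarrow> g \<in> hom Z Y \<Longrightarrow> pair Z X Y f g \<in> hom Z (prd X Y)"
  using fp unfolding has_finite_products_def by blast
lemma p1_pair[simp]: "f \<in> hom Z X \<Longrightarrow> g \<in> hom Z Y \<Longrightarrow> cmp Z (prd X Y) X (p1 X Y) (pair Z X Y f g) = f"
  using fp unfolding has_finite_products_def by blast
lemma p2_pair[simp]: "f \<in> hom Z X \<Longrightarrow> g \<in> hom Z Y \<Longrightarrow> cmp Z (prd X Y) Y (p2 X Y) (pair Z X Y f g) = g"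
  using fp unfolding has_finite_products_def by blast
lemma pair_eta: "h \<in> hom Z (prd X Y) \<Longrightarrow>
  pair Z X Y (cmp Z (prd X Y) X (p1 X Y) h) (cmp Z (prd X Y) Y (p2 X Y) h) = h"
  using fp unfolding has_finite_products_def by blast
lemma pair_pi[simp]: "pair (prd X Y) X Y (p1 X Y) (p2 X Y) = idm (prd X Y)"
  using pair_eta[of "idm (prd X Y)" "prd X Y" X Y] by simp
lemma pair_eq[simp]: "f \<in> hom Z X \<Longrightarrow> g \<in> hom Z Y \<Longrightarrow> f' \<in> hom Z X \<Longrightarrow> g' \<in> hom Z Y \<Longrightarrow>
   pair Z X Y f g = pair Z X Y f' g' \<longleftrightarrow> f = f' \<and> g = g'"
  by (metis p1_pair p2_pair)
lemma pair_cmp[simp]: "f \<in> hom Z X \<Longrightarrow> g \<in> hom Z Y \<Longrightarrow> r \<in> hom W Z \<Longrightarrow>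
  cmp W Z (prd X Y) (pair Z X Y f g) r = pair W X Y (cmp W Z X f r) (cmp W Z Y g r)"
proof -
  assume a: "f \<in> hom Z X" "g \<in> hom Z Y" "r \<in> hom W Z"
  have "cmp W Z (prd X Y) (pair Z X Y f g) r = pair W X Y
     (cmp W (prd X Y) X (p1 X Y) (cmp W Z (prd X Y) (pair Z X Y f g) r))
     (cmp W (prd X Y) Y (p2 X Y) (cmp W Z (prd X Y) (pair Z X Y f g) r))"
    by (rule pair_eta[symmetric]) (use a in simp)
  also have "\<dots> = pair W X Y (cmp W Z X f r) (cmp W Z Y g r)"
    using a by (simp flip: assoc)
  finally show ?thesis .
qed
lemma hom_prd_ext: "h \<in> hom Z (prd X Y) \<Longrightarrow> h' \<in> hom Z (prd X Y) \<Longrightarrow>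
   cmp Z (prd X Y) X (p1 X Y) h = cmp Z (prd X Y) X (p1 X Y) h' \<Longrightarrow>
   cmp Z (prd X Y) Y (p2 X Y) h = cmp Z (prd X Y) Y (p2 X Y) h' \<Longrightarrow> h = h'"
  by (metis pair_eta)

lemma fold2: "cmp X Y Z g f = h \<Longrightarrow> r \<in> hom W X \<Longrightarrow> f \<in> hom X Y \<Longrightarrow> g \<in> hom Y Z \<Longrightarrow>
  cmp W Y Z g (cmp W X Y f r) = cmp W X Z h r"
  by (metis assoc)

lemma fold3: "cmp X Y Z g (cmp X X' Y f k) = h \<Longrightarrow> r \<in> hom W X \<Longrightarrow> k \<in> hom X X' \<Longrightarrow> f \<in> hom X' Y \<Longrightarrow> g \<in> hom Y Z \<Longrightarrow>
  cmp W Y Z g (cmp W X' Y f (cmp W X X' k r)) = cmp W X Z h r"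
  by (metis assoc cmph)

abbreviation "crs \<equiv> cross C P"
lemma crsh[simp]: "f \<in> hom X X' \<Longrightarrow> g \<in> hom Y Y' \<Longrightarrow> crs X Y X' Y' f g \<in> hom (prd X Y) (prd X' Y')"
  unfolding cross_def by simp
lemma crs_id[simp]: "crs X Y X Y (idm X) (idm Y) = idm (prd X Y)"
  unfolding cross_def by simp
lemma crs_crs[simp]: "f \<in> hom X X' \<Longrightarrow> g \<in> hom Y Y' \<Longrightarrow> f' \<in> hom X' X'' \<Longrightarrow> g' \<in> hom Y' Y'' \<Longrightarrow>
  cmp (prd X Y) (prd X' Y') (prd X'' Y'') (crs X' Y' X'' Y'' f' g') (crs X Y X' Y' f g)
  = crs X Y X'' Y'' (cmp X X' X'' f' f) (cmp Y Y' Y'' g' g)"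
  unfolding cross_def by simp

lemma crs_crs2[simp]: "f \<in> hom X X' \<Longrightarrow> g \<in> hom Y Y' \<Longrightarrow> f' \<in> hom X' X'' \<Longrightarrow> g' \<in> hom Y' Y'' \<Longrightarrow> r \<in> hom W (prd X Y) \<Longrightarrow>
  cmp W (prd X' Y') (prd X'' Y'') (crs X' Y' X'' Y'' f' g') (cmp W (prd X Y) (prd X' Y') (crs X Y X' Y' f g) r)
  = cmp W (prd X Y) (prd X'' Y'') (crs X Y X'' Y'' (cmp X X' X'' f' f) (cmp Y Y' Y'' g' g)) r"
  by (subst fold2[OF crs_crs]) simp_all
end



locale mnd = cp +
  fixes T and eta and ext
  assumes kt: "is_kleisli_triple C T eta ext"
begin
lemma etah[simp]: "eta X \<in> hom X (T X)" using kt unfolding is_kleisli_triple_def by blast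
lemma exth[simp]: "f \<in> hom X (T Y) \<Longrightarrow> ext X Y f \<in> hom (T X) (T Y)"
  using kt unfolding is_kleisli_triple_def by blast
lemma ext_eta[simp]: "ext X X (eta X) = idm (T X)" using kt unfolding is_kleisli_triple_def by blast
lemma ext_eta_l[simp]: "f \<in> hom X (T Y) \<Longrightarrow> cmp X (T X) (T Y) (ext X Y f) (eta X) = f"
  using kt unfolding is_kleisli_triple_def by blast
lemma ext_eta_l2[simp]: "f \<in> hom X (T Y) \<Longrightarrow> r \<in> hom W X \<Longrightarrow>
   cmp W (T X) (T Y) (ext X Y f) (cmp W X (T X) (eta X) r) = cmp W X (T Y) f r"
  by (metis ext_eta_l assoc etah exth)
lemma ext_ext[simp]: "f \<in> hom X (T Y) \<Longrightarrow> g \<in> hom Y (T Z) \<Longrightarrow>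
   cmp (T X) (T Y) (T Z) (ext Y Z g) (ext X Y f) = ext X Z (cmp X (T Y) (T Z) (ext Y Z g) f)"
  using kt unfolding is_kleisli_triple_def by metis
lemma ext_ext2[simp]: "f \<in> hom X (T Y) \<Longrightarrow> g \<in> hom Y (T Z) \<Longrightarrow> r \<in> hom W (T X) \<Longrightarrow>
   cmp W (T Y) (T Z) (ext Y Z g) (cmp W (T X) (T Y) (ext X Y f) r)
   = cmp W (T X) (T Z) (ext X Z (cmp X (T Y) (T Z) (ext Y Z g) f)) r"
  by (metis ext_ext assoc exth)
abbreviation "Tm \<equiv> Tmap C T eta ext"
lemma Tm_def': "Tm X Y f = ext X Y (cmp X Y (T Y) (eta Y) f)" by (simp add: Tmap_def)
lemma Tmh[simp]: "f \<in> hom X Y \<Longrightarrow> Tm X Y f \<in> hom (T X) (T Y)" by (simp add: Tmap_def)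
end

locale ccc = cp +
  fixes E
  assumes ccc: "is_ccc C P E"
begin
abbreviation "ex \<equiv> eExp E"
abbreviation "ev \<equiv> eEv E"
abbreviation "cur \<equiv> eCur E"
abbreviation "unc \<equiv> uncur C P E"
lemma evh[simp]: "ev S B \<in> hom (prd (ex S B) S) B" using ccc unfolding is_ccc_def by blast
lemma curh[simp]: "h \<in> hom (prd A S) B \<Longrightarrow> cur A S B h \<in> hom A (ex S B)"
  using ccc unfolding is_ccc_def by blast
lemma unc_cur[simp]: "h \<in> hom (prd A S) B \<Longrightarrow> unc A S B (cur A S B h) = h"
  using ccc unfolding is_ccc_def uncur_def by blast
lemma cur_unc[simp]: "k \<in> hom A (ex S B) \<Longrightarrow> cur A S B (unc A S B k) = k"
  using ccc unfolding is_ccc_def uncur_def by blast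
lemma unch[simp]: "k \<in> hom A (ex S B) \<Longrightarrow> unc A S B k \<in> hom (prd A S) B"
  unfolding uncur_def by simp
lemma ev_crs[simp]: "cmp (prd A S) (prd (ex S B) S) B (ev S B) (crs A S (ex S B) S k (idm S)) = unc A S B k"
  unfolding uncur_def ..
lemma unc_inj: "k \<in> hom A (ex S B) \<Longrightarrow> k' \<in> hom A (ex S B) \<Longrightarrow> unc A S B k = unc A S B k' \<Longrightarrow> k = k'"
  by (metis cur_unc)
lemma unc_cmp: "k \<in> hom A (ex S B) \<Longrightarrow> f \<in> hom A' A \<Longrightarrow>
  unc A' S B (cmp A' A (ex S B) k f) = cmp (prd A' S) (prd A S) B (unc A S B k) (crs A' S A S f (idm S))"
proof -
  assume a: "k \<in> hom A (ex S B)" "f \<in> hom A' A"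
  have "crs A' S (ex S B) S (cmp A' A (ex S B) k f) (idm S) =
        cmp (prd A' S) (prd A S) (prd (ex S B) S) (crs A S (ex S B) S k (idm S)) (crs A' S A S f (idm S))"
    using a by simp
  then show ?thesis using a unfolding uncur_def by (simp del: ev_crs)
qed
end

locale stm = ccc + mnd +
  fixes S :: 'a
begin
abbreviation "sT \<equiv> stT P E T S"
abbreviation "sEta \<equiv> stEta P E T eta S"
abbreviation "sExt \<equiv> stExt C P E T ext S"

lemma sEtah[simp]: "sEta X \<in> hom X (sT X)" unfolding stEta_def stT_def by simp
lemma unc_sEta[simp]: "unc X S (T (prd X S)) (sEta X) = eta (prd X S)" unfolding stEta_def by simp
lemma sExt_alt: "sExt X Y f = cur (sT X) S (T (prd Y S))
     (cmp (prd (sT X) S) (T (prd X S)) (T (prd Y S)) (ext (prd X S) (prd Y S) (unc X S (T (prd Y S)) f))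
           (ev S (T (prd X S))))" unfolding stExt_def Let_def ..
lemma sExth[simp]: "f \<in> hom X (sT Y) \<Longrightarrow> sExt X Y f \<in> hom (sT X) (sT Y)"
  unfolding sExt_alt by (simp add: stT_def)
lemma sExth'[simp]: "f \<in> hom X (ex S (T (prd Y S))) \<Longrightarrow> sExt X Y f \<in> hom (ex S (T (prd X S))) (ex S (T (prd Y S)))"
  using sExth[of f X Y] by (simp add: stT_def)
lemma sEtah'[simp]: "sEta X \<in> hom X (ex S (T (prd X S)))" using sEtah[of X] by (simp add: stT_def)
lemma unc_sExt: "f \<in> hom X (ex S (T (prd Y S))) \<Longrightarrow> unc (ex S (T (prd X S))) S (T (prd Y S)) (sExt X Y f) =
    cmp (prd (ex S (T (prd X S))) S) (T (prd X S)) (T (prd Y S)) (ext (prd X S) (prd Y S) (unc X S (T (prd Y S)) f))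
           (ev S (T (prd X S)))"
  unfolding sExt_alt by (simp add: stT_def)
lemma unc_sExt_cmp[simp]: "f \<in> hom X (ex S (T (prd Y S))) \<Longrightarrow> k \<in> hom A (ex S (T (prd X S))) \<Longrightarrow>
   unc A S (T (prd Y S)) (cmp A (ex S (T (prd X S))) (ex S (T (prd Y S))) (sExt X Y f) k) =
   cmp (prd A S) (T (prd X S)) (T (prd Y S)) (ext (prd X S) (prd Y S) (unc X S (T (prd Y S)) f))
     (unc A S (T (prd X S)) k)"
proof -
  assume a0: "f \<in> hom X (ex S (T (prd Y S)))" "k \<in> hom A (ex S (T (prd X S)))"
  then have a: "f \<in> hom X (sT Y)" "k \<in> hom A (sT X)" by (simp_all add: stT_def)
  have "unc A S (T (prd Y S)) (cmp A (sT X) (sT Y) (sExt X Y f) k) =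
     cmp (prd A S) (prd (sT X) S) (T (prd Y S)) (unc (sT X) S (T (prd Y S)) (sExt X Y f)) (crs A S (sT X) S k (idm S))"
    unfolding stT_def by (rule unc_cmp) (use a in \<open>simp_all add: stT_def\<close>)
  also have "\<dots> = cmp (prd A S) (T (prd X S)) (T (prd Y S)) (ext (prd X S) (prd Y S) (unc X S (T (prd Y S)) f))
     (unc A S (T (prd X S)) k)"
    using a by (simp add: unc_sExt stT_def)
  finally show ?thesis by (simp add: stT_def)
qed

lemma st_kt: "is_kleisli_triple C sT sEta sExt"
  unfolding is_kleisli_triple_def stT_def
proof (intro conjI allI impI)
  fix X show "sEta X \<in> hom X (ex S (T (prd X S)))" by simp
next
  fix X Y f assume "f \<in> hom X (ex S (T (prd Y S)))" then show "sExt X Y f \<in> hom (ex S (T (prd X S))) (ex S (T (prd Y S)))" by simp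
next
  fix X show "sExt X X (sEta X) = idm (ex S (T (prd X S)))"
  proof -
    have "sExt X X (sEta X) = cur (ex S (T (prd X S))) S (T (prd X S)) (unc (ex S (T (prd X S))) S (T (prd X S)) (idm (ex S (T (prd X S)))))"
      unfolding sExt_alt unc_sEta stT_def uncur_def by simp
    also have "\<dots> = idm (ex S (T (prd X S)))" by simp
    finally show ?thesis .
  qed
next
  fix X Y f assume f: "f \<in> hom X (ex S (T (prd Y S)))"
  show "cmp X (ex S (T (prd X S))) (ex S (T (prd Y S))) (sExt X Y f) (sEta X) = f"
    by (rule unc_inj[where A=X and S=S and B="T (prd Y S)"]) (use f in simp_all)
next
  fix X Y Z f g assume f: "f \<in> hom X (ex S (T (prd Y S)))" and g: "g \<in> hom Y (ex S (T (prd Z S)))"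
  show "sExt X Z (cmp X (ex S (T (prd Y S))) (ex S (T (prd Z S))) (sExt Y Z g) f) = cmp (ex S (T (prd X S))) (ex S (T (prd Y S))) (ex S (T (prd Z S))) (sExt Y Z g) (sExt X Y f)"
    by (rule unc_inj[where A="ex S (T (prd X S))" and S=S and B="T (prd Z S)"])
       (use f g in \<open>simp_all add: unc_sExt\<close>)
qed
end




lemma kk_basic:
  assumes KK: "is_kk_category (kleisli_kk C T eta ext J B St)"
  shows "\<And>X Y f g. f \<in> cHom C X (T Y) \<Longrightarrow> g \<in> cHom C X (T Y) \<Longrightarrow> J X Y f g \<in> cHom C X (T Y)"
    and "\<And>X Y. B X Y \<in> cHom C X (T Y)"
    and "\<And>X f. f \<in> cHom C X (T X) \<Longrightarrow> St X f \<in> cHom C X (T X)"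
  using KK unfolding is_kk_category_def kleisli_kk_def by auto

lemma state_part:
  assumes KM: "kleene_monad C T eta ext J B St" and CC: "is_ccc C P E"
  shows "kleene_monad C (stT P E T S) (stEta P E T eta S) (stExt C P E T ext S)
          (stJoin C P E T J S) (stBot P E T B S) (stStar C P E T St S)"
proof -
  have cat: "is_category C" and kt: "is_kleisli_triple C T eta ext"
    and KK: "is_kk_category (kleisli_kk C T eta ext J B St)"
    using KM unfolding kleene_monad_def by auto
  have fp: "has_finite_products C P" using CC unfolding is_ccc_def by auto
  interpret stm C P E T eta ext S
    by (unfold_locales) (use cat fp CC kt in auto)
  note kb = kk_basic[OF KK]
  show ?thesis
    unfolding kleene_monad_def
  proof (intro conjI cat st_kt)
    show "is_kk_category (kleisli_kk C (stT P E T S) (stEta P E T eta S) (stExt C P E T ext S)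
          (stJoin C P E T J S) (stBot P E T B S) (stStar C P E T St S))"
      apply (rule kk_transfer[OF KK, where F = "\<lambda>X. prd X S" and \<Phi> = "\<lambda>X Y. unc X S (T (prd Y S))"])
      apply (simp_all add: kleisli_kk_def stT_def stJoin_def stBot_def stStar_def kb unc_inj)
      done
  qed
qed




locale wr = mnd +
  fixes tau M e m
  assumes st: "is_strength C P T eta ext tau" and mo: "is_monoid_object C P M e m"
begin

lemma tauh[simp]: "tau X Y \<in> hom (prd X (T Y)) (T (prd X Y))"
  using st unfolding is_strength_def by blast
lemma eh[simp]: "e \<in> hom one M" using mo unfolding is_monoid_object_def by blast
lemma mh[simp]: "m \<in> hom (prd M M) M" using mo unfolding is_monoid_object_def by blast

lemma tau_eta0: "cmp (prd X Y) (prd X (T Y)) (T (prd X Y)) (tau X Y) (crs X Y X (T Y) (idm X) (eta Y)) = eta (prd X Y)"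
  using st unfolding is_strength_def by blast
lemma tau_ext0: "f \<in> hom Y (T Z) \<Longrightarrow>
   cmp (prd X (T Y)) (prd X (T Z)) (T (prd X Z)) (tau X Z) (crs X (T Y) X (T Z) (idm X) (ext Y Z f))
   = cmp (prd X (T Y)) (T (prd X Y)) (T (prd X Z))
       (ext (prd X Y) (prd X Z) (cmp (prd X Y) (prd X (T Z)) (T (prd X Z)) (tau X Z) (crs X Y X (T Z) (idm X) f)))
       (tau X Y)"
  using st unfolding is_strength_def by blast
lemma tau_nat0: "f \<in> hom X X' \<Longrightarrow> g \<in> hom Y Y' \<Longrightarrow>
   cmp (prd X (T Y)) (T (prd X Y)) (T (prd X' Y')) (Tm (prd X Y) (prd X' Y') (crs X Y X' Y' f g)) (tau X Y)
   = cmp (prd X (T Y)) (prd X' (T Y')) (T (prd X' Y')) (tau X' Y') (crs X (T Y) X' (T Y') f (Tm Y Y' g))"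
  using st unfolding is_strength_def by blast
lemma tau_unit0: "cmp (prd one (T Y)) (T (prd one Y)) (T Y) (Tm (prd one Y) Y (p2 one Y)) (tau one Y) = p2 one (T Y)"
  using st unfolding is_strength_def by blast
lemma tau_assoc0: "cmp (prd (prd X Y) (T Z)) (T (prd (prd X Y) Z)) (T (prd X (prd Y Z)))
          (Tm (prd (prd X Y) Z) (prd X (prd Y Z)) (assoc_r C P X Y Z))
          (tau (prd X Y) Z)
        = cmp (prd (prd X Y) (T Z)) (prd X (T (prd Y Z))) (T (prd X (prd Y Z)))
            (tau X (prd Y Z))
            (cmp (prd (prd X Y) (T Z)) (prd X (prd Y (T Z))) (prd X (T (prd Y Z)))
               (crs X (prd Y (T Z)) X (T (prd Y Z)) (idm X) (tau Y Z))
               (assoc_r C P X Y (T Z)))"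
  using st unfolding is_strength_def by blast

lemma tau_eta[simp]: "a \<in> hom W X \<Longrightarrow> b \<in> hom V Y \<Longrightarrow>
  cmp (prd W V) (prd X (T Y)) (T (prd X Y)) (tau X Y) (crs W V X (T Y) a (cmp V Y (T Y) (eta Y) b))
  = cmp (prd W V) (prd X Y) (T (prd X Y)) (eta (prd X Y)) (crs W V X Y a b)"
proof -
  assume a: "a \<in> hom W X" "b \<in> hom V Y"
  have "crs W V X (T Y) a (cmp V Y (T Y) (eta Y) b) =
     cmp (prd W V) (prd X Y) (prd X (T Y)) (crs X Y X (T Y) (idm X) (eta Y)) (crs W V X Y a b)"
    using a by simp
  then show ?thesis using a by (simp only:) (rule fold2[OF tau_eta0], simp_all)
qed

lemma tau_ext[simp]: "a \<in> hom W X \<Longrightarrow> f \<in> hom Y (T Z) \<Longrightarrow> h \<in> hom V (T Y) \<Longrightarrow>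
  cmp (prd W V) (prd X (T Z)) (T (prd X Z)) (tau X Z) (crs W V X (T Z) a (cmp V (T Y) (T Z) (ext Y Z f) h))
  = cmp (prd W V) (T (prd X Y)) (T (prd X Z))
       (ext (prd X Y) (prd X Z) (cmp (prd X Y) (prd X (T Z)) (T (prd X Z)) (tau X Z) (crs X Y X (T Z) (idm X) f)))
       (cmp (prd W V) (prd X (T Y)) (T (prd X Y)) (tau X Y) (crs W V X (T Y) a h))"
proof -
  assume a: "a \<in> hom W X" "f \<in> hom Y (T Z)" "h \<in> hom V (T Y)"
  have "crs W V X (T Z) a (cmp V (T Y) (T Z) (ext Y Z f) h) =
     cmp (prd W V) (prd X (T Y)) (prd X (T Z)) (crs X (T Y) X (T Z) (idm X) (ext Y Z f)) (crs W V X (T Y) a h)"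
    using a by simp
  then show ?thesis using a by (simp only:) (subst fold2[OF tau_ext0], simp_all)
qed

lemma tau_ext1[simp]: "a \<in> hom W X \<Longrightarrow> f \<in> hom Y (T Z) \<Longrightarrow>
  cmp (prd W (T Y)) (prd X (T Z)) (T (prd X Z)) (tau X Z) (crs W (T Y) X (T Z) a (ext Y Z f))
  = cmp (prd W (T Y)) (T (prd X Y)) (T (prd X Z))
       (ext (prd X Y) (prd X Z) (cmp (prd X Y) (prd X (T Z)) (T (prd X Z)) (tau X Z) (crs X Y X (T Z) (idm X) f)))
       (cmp (prd W (T Y)) (prd X (T Y)) (T (prd X Y)) (tau X Y) (crs W (T Y) X (T Y) a (idm (T Y))))"
  using tau_ext[of a W X f Y Z "idm (T Y)" "T Y"] by simp

lemma tau_nat1: "f \<in> hom X X' \<Longrightarrow> h \<in> hom V (T Y) \<Longrightarrow>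
  cmp (prd X V) (prd X' (T Y)) (T (prd X' Y)) (tau X' Y) (crs X V X' (T Y) f h)
  = cmp (prd X V) (T (prd X Y)) (T (prd X' Y)) (ext (prd X Y) (prd X' Y) (cmp (prd X Y) (prd X' Y) (T (prd X' Y)) (eta (prd X' Y)) (crs X Y X' Y f (idm Y))))
     (cmp (prd X V) (prd X (T Y)) (T (prd X Y)) (tau X Y) (crs X V X (T Y) (idm X) h))"
proof -
  assume a: "f \<in> hom X X'" "h \<in> hom V (T Y)"
  have e1: "crs X V X' (T Y) f h = cmp (prd X V) (prd X (T Y)) (prd X' (T Y)) (crs X (T Y) X' (T Y) f (Tm Y Y (idm Y))) (crs X V X (T Y) (idm X) h)"
    using a by (simp add: Tm_def')
  have e2: "cmp (prd X (T Y)) (prd X' (T Y)) (T (prd X' Y)) (tau X' Y) (crs X (T Y) X' (T Y) f (Tm Y Y (idm Y))) =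
     cmp (prd X (T Y)) (T (prd X Y)) (T (prd X' Y)) (Tm (prd X Y) (prd X' Y) (crs X Y X' Y f (idm Y))) (tau X Y)"
    using tau_nat0[of f X X' "idm Y" Y Y] a by simp
  show ?thesis unfolding e1 using a by (subst fold2[OF e2]) (simp_all add: Tm_def')
qed

definition mu where "mu Y = cmp (prd M (prd M Y)) (prd (prd M M) Y) (prd M Y) (crs (prd M M) Y M Y m (idm Y)) (assoc_l C P M M Y)"
lemma alh[simp]: "assoc_l C P X Y Z \<in> hom (prd X (prd Y Z)) (prd (prd X Y) Z)"
  unfolding assoc_l_def Let_def by simp
lemma arh[simp]: "assoc_r C P X Y Z \<in> hom (prd (prd X Y) Z) (prd X (prd Y Z))"
  unfolding assoc_r_def Let_def by simp
lemma muh[simp]: "mu Y \<in> hom (prd M (prd M Y)) (prd M Y)" unfolding mu_def by simp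

abbreviation "circ \<equiv> wrCirc C P T eta ext tau M m"
lemma circ_alt: "circ X Y f = cmp (prd M X) (T (prd M (prd M Y))) (T (prd M Y))
   (ext (prd M (prd M Y)) (prd M Y) (cmp (prd M (prd M Y)) (prd M Y) (T (prd M Y)) (eta (prd M Y)) (mu Y)))
   (cmp (prd M X) (prd M (T (prd M Y))) (T (prd M (prd M Y))) (tau M (prd M Y)) (crs M X M (T (prd M Y)) (idm M) f))"
  if "f \<in> hom X (T (prd M Y))"
  using that unfolding wrCirc_def Let_def mu_def by (simp add: Tm_def')
lemma circh[simp]: "f \<in> hom X (T (prd M Y)) \<Longrightarrow> circ X Y f \<in> hom (prd M X) (T (prd M Y))"
  by (simp add: circ_alt)

lemma m_assoc[simp]: "a \<in> hom W M \<Longrightarrow> b \<in> hom W M \<Longrightarrow> c \<in> hom W M \<Longrightarrow>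
  cmp W (prd M M) M m (pair W M M (cmp W (prd M M) M m (pair W M M a b)) c)
  = cmp W (prd M M) M m (pair W M M a (cmp W (prd M M) M m (pair W M M b c)))"
proof -
  assume a: "a \<in> hom W M" "b \<in> hom W M" "c \<in> hom W M"
  let ?q = "pair W (prd M M) M (pair W M M a b) c"
  have ax: "cmp (prd (prd M M) M) (prd M M) M m (crs (prd M M) M M M m (idm M))
     = cmp (prd (prd M M) M) (prd M M) M m
         (cmp (prd (prd M M) M) (prd M (prd M M)) (prd M M)
            (crs M (prd M M) M M (idm M) m) (assoc_r C P M M M))"
    using mo unfolding is_monoid_object_def by blast
  have "cmp W (prd (prd M M) M) M (cmp (prd (prd M M) M) (prd M M) M m (crs (prd M M) M M M m (idm M))) ?q
     = cmp W (prd (prd M M) M) M (cmp (prd (prd M M) M) (prd M M) M m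
         (cmp (prd (prd M M) M) (prd M (prd M M)) (prd M M)
            (crs M (prd M M) M M (idm M) m) (assoc_r C P M M M))) ?q"
    by (simp only: ax)
  then show ?thesis using a by (simp add: cross_def assoc_r_def Let_def)
qed

lemma m_unit_l[simp]: "a \<in> hom W M \<Longrightarrow>
  cmp W (prd M M) M m (pair W M M (cmp W one M e (trm W)) a) = a"
proof -
  assume a: "a \<in> hom W M"
  have ax: "cmp M (prd M M) M m (pair M M M (cmp M one M e (trm M)) (idm M)) = idm M"
    using mo unfolding is_monoid_object_def by blast
  have "cmp W M M (cmp M (prd M M) M m (pair M M M (cmp M one M e (trm M)) (idm M))) a = a"
    using a by (simp only: ax) simp
  then show ?thesis using a by simp
qed
lemma m_unit_r[simp]: "a \<in> hom W M \<Longrightarrow>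
  cmp W (prd M M) M m (pair W M M a (cmp W one M e (trm W))) = a"
proof -
  assume a: "a \<in> hom W M"
  have ax: "cmp M (prd M M) M m (pair M M M (idm M) (cmp M one M e (trm M))) = idm M"
    using mo unfolding is_monoid_object_def by blast
  have "cmp W M M (cmp M (prd M M) M m (pair M M M (idm M) (cmp M one M e (trm M)))) a = a"
    using a by (simp only: ax) simp
  then show ?thesis using a by simp
qed

lemma tau_assoc[simp]: "h \<in> hom V (T Z) \<Longrightarrow>
  cmp (prd X (prd Y V)) (prd X (T (prd Y Z))) (T (prd X (prd Y Z))) (tau X (prd Y Z))
    (crs X (prd Y V) X (T (prd Y Z)) (idm X) (cmp (prd Y V) (prd Y (T Z)) (T (prd Y Z)) (tau Y Z) (crs Y V Y (T Z) (idm Y) h)))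
  = cmp (prd X (prd Y V)) (T (prd (prd X Y) Z)) (T (prd X (prd Y Z)))
      (ext (prd (prd X Y) Z) (prd X (prd Y Z)) (cmp (prd (prd X Y) Z) (prd X (prd Y Z)) (T (prd X (prd Y Z))) (eta (prd X (prd Y Z))) (assoc_r C P X Y Z)))
      (cmp (prd X (prd Y V)) (prd (prd X Y) (T Z)) (T (prd (prd X Y) Z)) (tau (prd X Y) Z)
         (cmp (prd X (prd Y V)) (prd (prd X Y) V) (prd (prd X Y) (T Z)) (crs (prd X Y) V (prd X Y) (T Z) (idm (prd X Y)) h) (assoc_l C P X Y V)))"
proof -
  assume h: "h \<in> hom V (T Z)"
  have p: "crs X (prd Y V) X (prd Y (T Z)) (idm X) (crs Y V Y (T Z) (idm Y) h) =
     cmp (prd X (prd Y V)) (prd (prd X Y) (T Z)) (prd X (prd Y (T Z))) (assoc_r C P X Y (T Z))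
       (cmp (prd X (prd Y V)) (prd (prd X Y) V) (prd (prd X Y) (T Z)) (crs (prd X Y) V (prd X Y) (T Z) (idm (prd X Y)) h) (assoc_l C P X Y V))"
    using h by (simp add: cross_def assoc_r_def assoc_l_def Let_def)
  have q: "crs X (prd Y V) X (T (prd Y Z)) (idm X) (cmp (prd Y V) (prd Y (T Z)) (T (prd Y Z)) (tau Y Z) (crs Y V Y (T Z) (idm Y) h))
    = cmp (prd X (prd Y V)) (prd X (prd Y (T Z))) (prd X (T (prd Y Z))) (crs X (prd Y (T Z)) X (T (prd Y Z)) (idm X) (tau Y Z))
        (crs X (prd Y V) X (prd Y (T Z)) (idm X) (crs Y V Y (T Z) (idm Y) h))"
    using h by simp
  show ?thesis
    unfolding q p using h
    apply (subst fold3[OF tau_assoc0[symmetric]])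
    apply (simp_all add: Tm_def')
    done
qed

lemma mu_assoc: "cmp (prd (prd M M) (prd M Z)) (prd M (prd M Z)) (prd M Z) (mu Z)
            (cmp (prd (prd M M) (prd M Z)) (prd M (prd M (prd M Z)))
              (prd M (prd M Z))
              (crs M (prd M (prd M Z)) M (prd M Z) (idm M) (mu Z))
              (assoc_r C P M M (prd M Z)))
  = cmp (prd (prd M M) (prd M Z)) (prd M (prd M Z)) (prd M Z) (mu Z) (crs (prd M M) (prd M Z) M (prd M Z) m (idm (prd M Z)))"
  unfolding mu_def by (simp add: cross_def assoc_r_def assoc_l_def Let_def m_assoc[symmetric] pair_eta del: m_assoc)

lemma circ_circ: "g \<in> hom Y (T (prd M Z)) \<Longrightarrow>
  circ (prd M Y) Z (circ Y Z g) = cmp (prd M (prd M Y)) (prd M Y) (T (prd M Z)) (circ Y Z g) (mu Y)"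
proof -
  assume g: "g \<in> hom Y (T (prd M Z))"
  have a: "cmp (prd M (prd M Y)) (prd M Y) (prd M (T (prd M Z))) (crs M Y M (T (prd M Z)) (idm M) g) (mu Y)
     = cmp (prd M (prd M Y)) (prd (prd M M) Y) (prd M (T (prd M Z))) (crs (prd M M) Y M (T (prd M Z)) m g) (assoc_l C P M M Y)"
    using g unfolding mu_def by simp
  have b: "cmp (prd M (prd M Y)) (prd M (T (prd M Z))) (T (prd M (prd M Z))) (tau M (prd M Z))
     (cmp (prd M (prd M Y)) (prd (prd M M) Y) (prd M (T (prd M Z))) (crs (prd M M) Y M (T (prd M Z)) m g) (assoc_l C P M M Y))
   = cmp (prd M (prd M Y)) (T (prd (prd M M) (prd M Z))) (T (prd M (prd M Z)))
       (ext (prd (prd M M) (prd M Z)) (prd M (prd M Z)) (cmp (prd (prd M M) (prd M Z)) (prd M (prd M Z)) (T (prd M (prd M Z))) (eta (prd M (prd M Z))) (crs (prd M M) (prd M Z) M (prd M Z) m (idm (prd M Z)))))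
       (cmp (prd M (prd M Y)) (prd (prd M M) (T (prd M Z))) (T (prd (prd M M) (prd M Z))) (tau (prd M M) (prd M Z))
         (cmp (prd M (prd M Y)) (prd (prd M M) Y) (prd (prd M M) (T (prd M Z))) (crs (prd M M) Y (prd M M) (T (prd M Z)) (idm (prd M M)) g) (assoc_l C P M M Y)))"
    using g by (subst fold2[OF tau_nat1]) simp_all
  show ?thesis using g by (simp add: circ_alt a b mu_assoc)
qed

lemma circ_ext: "f \<in> hom X (T (prd M Y)) \<Longrightarrow> g \<in> hom Y (T (prd M Z)) \<Longrightarrow>
  circ X Z (cmp X (T (prd M Y)) (T (prd M Z)) (ext (prd M Y) (prd M Z) (circ Y Z g)) f)
  = cmp (prd M X) (T (prd M Y)) (T (prd M Z)) (ext (prd M Y) (prd M Z) (circ Y Z g)) (circ X Y f)"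
proof -
  assume f: "f \<in> hom X (T (prd M Y))" and g: "g \<in> hom Y (T (prd M Z))"
  have c2: "cmp (prd M (prd M Y)) (T (prd M (prd M Z))) (T (prd M Z))
   (ext (prd M (prd M Z)) (prd M Z) (cmp (prd M (prd M Z)) (prd M Z) (T (prd M Z)) (eta (prd M Z)) (mu Z)))
   (cmp (prd M (prd M Y)) (prd M (T (prd M Z))) (T (prd M (prd M Z))) (tau M (prd M Z)) (crs M (prd M Y) M (T (prd M Z)) (idm M) (circ Y Z g)))
   = cmp (prd M (prd M Y)) (prd M Y) (T (prd M Z)) (circ Y Z g) (mu Y)"
    using circ_circ[OF g] circ_alt[of "circ Y Z g" "prd M Y" Z] g by simp
  have fg: "cmp X (T (prd M Y)) (T (prd M Z)) (ext (prd M Y) (prd M Z) (circ Y Z g)) f \<in> hom X (T (prd M Z))"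
    using f g by simp
  show ?thesis using f g by (simp add: circ_alt[OF f] circ_alt[OF fg] c2)
qed

lemma pair_trm_p2[simp]: "pair (prd one W) one W (trm (prd one W)) (p2 one W) = idm (prd one W)"
proof -
  have "p1 one W = trm (prd one W)" by (rule trm_uniq) simp
  then show ?thesis using pair_pi[of one W] by simp
qed

lemma tau_one: "cmp (T W) (prd one (T W)) (T (prd one W)) (tau one W) (pair (T W) one (T W) (trm (T W)) (idm (T W)))
  = ext W (prd one W) (cmp W (prd one W) (T (prd one W)) (eta (prd one W)) (pair W one W (trm W) (idm W)))"
proof -
  let ?q = "ext W (prd one W) (cmp W (prd one W) (T (prd one W)) (eta (prd one W)) (pair W one W (trm W) (idm W)))"
  have k: "cmp (T (prd one W)) (T W) (T (prd one W)) ?q (Tm (prd one W) W (p2 one W)) = idm (T (prd one W))"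
    by (simp add: Tm_def')
  have "tau one W = cmp (prd one (T W)) (T (prd one W)) (T (prd one W)) (idm (T (prd one W))) (tau one W)"
    by simp
  also have "\<dots> = cmp (prd one (T W)) (T W) (T (prd one W)) ?q
      (cmp (prd one (T W)) (T (prd one W)) (T W) (Tm (prd one W) W (p2 one W)) (tau one W))"
    unfolding k[symmetric] by (rule assoc) (simp_all add: Tm_def')
  also have "\<dots> = cmp (prd one (T W)) (T W) (T (prd one W)) ?q (p2 one (T W))"
    by (simp only: tau_unit0)
  finally have t: "tau one W = cmp (prd one (T W)) (T W) (T (prd one W)) ?q (p2 one (T W))" .
  show ?thesis by (subst t) simp
qed

abbreviation "uu X \<equiv> pair X M X (cmp X one M e (trm X)) (idm X)"
lemma uuh[simp]: "uu X \<in> hom X (prd M X)" by simp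

lemma mu_unit_r[simp]: "cmp (prd M X) (prd M (prd M X)) (prd M X) (mu X) (crs M X M (prd M X) (idm M) (uu X)) = idm (prd M X)"
  unfolding mu_def by (simp add: cross_def assoc_l_def Let_def)
lemma mu_unit_l[simp]: "cmp (prd M Y) (prd M (prd M Y)) (prd M Y) (mu Y) (cmp (prd M Y) (prd one (prd M Y)) (prd M (prd M Y))
   (crs one (prd M Y) M (prd M Y) e (idm (prd M Y))) (pair (prd M Y) one (prd M Y) (trm (prd M Y)) (idm (prd M Y)))) = idm (prd M Y)"
  unfolding mu_def by (simp add: cross_def assoc_l_def Let_def)

lemma circ_unit: "f \<in> hom X (T (prd M Y)) \<Longrightarrow> cmp X (prd M X) (T (prd M Y)) (circ X Y f) (uu X) = f"
proof -
  assume f: "f \<in> hom X (T (prd M Y))"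
  have a: "cmp X (prd M X) (prd M (T (prd M Y))) (crs M X M (T (prd M Y)) (idm M) f) (uu X)
    = cmp X (T (prd M Y)) (prd M (T (prd M Y))) (cmp (T (prd M Y)) (prd one (T (prd M Y))) (prd M (T (prd M Y)))
         (crs one (T (prd M Y)) M (T (prd M Y)) e (idm (T (prd M Y)))) (pair (T (prd M Y)) one (T (prd M Y)) (trm (T (prd M Y))) (idm (T (prd M Y))))) f"
    using f by (simp add: cross_def)
  have b: "cmp (T (prd M Y)) (prd M (T (prd M Y))) (T (prd M (prd M Y))) (tau M (prd M Y))
     (cmp (T (prd M Y)) (prd one (T (prd M Y))) (prd M (T (prd M Y)))
         (crs one (T (prd M Y)) M (T (prd M Y)) e (idm (T (prd M Y)))) (pair (T (prd M Y)) one (T (prd M Y)) (trm (T (prd M Y))) (idm (T (prd M Y)))))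
    = ext (prd M Y) (prd M (prd M Y)) (cmp (prd M Y) (prd one (prd M Y)) (T (prd M (prd M Y)))
        (cmp (prd one (prd M Y)) (prd M (prd M Y)) (T (prd M (prd M Y))) (eta (prd M (prd M Y))) (crs one (prd M Y) M (prd M Y) e (idm (prd M Y))))
        (pair (prd M Y) one (prd M Y) (trm (prd M Y)) (idm (prd M Y))))"
    by (subst fold2[OF tau_nat1]) (simp_all add: tau_one)
  have "cmp X (prd M X) (T (prd M Y)) (circ X Y f) (uu X) =
    cmp X (T (prd M (prd M Y))) (T (prd M Y))
     (ext (prd M (prd M Y)) (prd M Y) (cmp (prd M (prd M Y)) (prd M Y) (T (prd M Y)) (eta (prd M Y)) (mu Y)))
     (cmp X (T (prd M Y)) (T (prd M (prd M Y))) (cmp (T (prd M Y)) (prd M (T (prd M Y))) (T (prd M (prd M Y))) (tau M (prd M Y))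
     (cmp (T (prd M Y)) (prd one (T (prd M Y))) (prd M (T (prd M Y)))
         (crs one (T (prd M Y)) M (T (prd M Y)) e (idm (T (prd M Y)))) (pair (T (prd M Y)) one (T (prd M Y)) (trm (T (prd M Y))) (idm (T (prd M Y)))))) f)"
    using f by (simp add: circ_alt a del: pair_cmp)
  also have "\<dots> = f" unfolding b using f by simp
  finally show ?thesis .
qed

lemma circ_eta: "circ X X (cmp X (prd M X) (T (prd M X)) (eta (prd M X)) (uu X)) = eta (prd M X)"
  by (simp add: circ_alt)

end



lemma kkD:
  assumes "is_kk_category K"
  shows kk_jh: "\<And>X Y f g. f \<in> cHom K X Y \<Longrightarrow> g \<in> cHom K X Y \<Longrightarrow> kJoin K X Y f g \<in> cHom K X Y"
   and kk_jc: "\<And>X Y f g. f \<in> cHom K X Y \<Longrightarrow> g \<in> cHom K X Y \<Longrightarrow> kJoin K X Y f g = kJoin K X Y g f"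
   and kk_jl: "\<And>X Y Z f g h. f \<in> cHom K X Y \<Longrightarrow> g \<in> cHom K Y Z \<Longrightarrow> h \<in> cHom K Y Z \<Longrightarrow>
        cCmp K X Y Z (kJoin K Y Z g h) f = kJoin K X Z (cCmp K X Y Z g f) (cCmp K X Y Z h f)"
   and kk_jr: "\<And>X Y Z f h g. f \<in> cHom K X Y \<Longrightarrow> h \<in> cHom K X Y \<Longrightarrow> g \<in> cHom K Y Z \<Longrightarrow>
        cCmp K X Y Z g (kJoin K X Y f h) = kJoin K X Z (cCmp K X Y Z g f) (cCmp K X Y Z g h)"
   and kk_bl: "\<And>X Y Z f. f \<in> cHom K X Y \<Longrightarrow> cCmp K X Y Z (kBot K Y Z) f = kBot K X Z"
   and kk_br: "\<And>X Y Z g. g \<in> cHom K Y Z \<Longrightarrow> cCmp K X Y Z g (kBot K X Y) = kBot K X Z"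
   and kk_sh: "\<And>X f. f \<in> cHom K X X \<Longrightarrow> kStar K X f \<in> cHom K X X"
   and kk_L: "\<And>Y Z f g. f \<in> cHom K Y Y \<Longrightarrow> g \<in> cHom K Y Z \<Longrightarrow>
        least_prefixpoint K Y Z (\<lambda>x. kJoin K Y Z g (cCmp K Y Y Z x f)) (cCmp K Y Y Z g (kStar K Y f))"
   and kk_R: "\<And>X Y f h. f \<in> cHom K Y Y \<Longrightarrow> h \<in> cHom K X Y \<Longrightarrow>
        least_prefixpoint K X Y (\<lambda>x. kJoin K X Y h (cCmp K X Y Y f x)) (cCmp K X Y Y (kStar K Y f) h)"
  using assms unfolding is_kk_category_def by auto

lemma kk_commute:
  fixes K :: "('o,'a,'z) kk_scheme"
  assumes KK: "is_kk_category K"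
    and a: "a \<in> cHom K A B" and s: "s \<in> cHom K A A" and k: "k \<in> cHom K B B"
    and comm: "cCmp K A A B a s = cCmp K A B B k a"
  shows "cCmp K A A B a (kStar K A s) = cCmp K A B B (kStar K B k) a"
proof -
  have Dc: "is_category K" using KK unfolding is_kk_category_def by blast
  note D0 = Dc[unfolded is_category_def]
  note D = KK[unfolded is_kk_category_def]
  have cmph: "\<And>X Y Z f g. f \<in> cHom K X Y \<Longrightarrow> g \<in> cHom K Y Z \<Longrightarrow> cCmp K X Y Z g f \<in> cHom K X Z"
    using D0 by blast
  have idh: "\<And>X. cId K X \<in> cHom K X X" using D0 by blast
  have idl: "\<And>X Y f. f \<in> cHom K X Y \<Longrightarrow> cCmp K X Y Y (cId K Y) f = f" using D0 by blast
  have idr: "\<And>X Y f. f \<in> cHom K X Y \<Longrightarrow> cCmp K X X Y f (cId K X) = f" using D0 by blast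
  have assoc: "\<And>W X Y Z f g h. f \<in> cHom K W X \<Longrightarrow> g \<in> cHom K X Y \<Longrightarrow> h \<in> cHom K Y Z \<Longrightarrow>
        cCmp K W Y Z h (cCmp K W X Y g f) = cCmp K W X Z (cCmp K X Y Z h g) f" using D0 by blast
  have jh: "\<And>X Y f g. f \<in> cHom K X Y \<Longrightarrow> g \<in> cHom K X Y \<Longrightarrow> kJoin K X Y f g \<in> cHom K X Y" by (rule kk_jh[OF KK])
  have jc: "\<And>X Y f g. f \<in> cHom K X Y \<Longrightarrow> g \<in> cHom K X Y \<Longrightarrow> kJoin K X Y f g = kJoin K X Y g f" by (rule kk_jc[OF KK])
  have jl: "\<And>X Y Z f g h. f \<in> cHom K X Y \<Longrightarrow> g \<in> cHom K Y Z \<Longrightarrow> h \<in> cHom K Y Z \<Longrightarrow>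
        cCmp K X Y Z (kJoin K Y Z g h) f = kJoin K X Z (cCmp K X Y Z g f) (cCmp K X Y Z h f)" by (rule kk_jl[OF KK])
  have jr: "\<And>X Y Z f h g. f \<in> cHom K X Y \<Longrightarrow> h \<in> cHom K X Y \<Longrightarrow> g \<in> cHom K Y Z \<Longrightarrow>
        cCmp K X Y Z g (kJoin K X Y f h) = kJoin K X Z (cCmp K X Y Z g f) (cCmp K X Y Z g h)" by (rule kk_jr[OF KK])
  have sh: "\<And>X f. f \<in> cHom K X X \<Longrightarrow> kStar K X f \<in> cHom K X X" by (rule kk_sh[OF KK])
  have L: "\<And>Y Z f g. f \<in> cHom K Y Y \<Longrightarrow> g \<in> cHom K Y Z \<Longrightarrow>
        least_prefixpoint K Y Z (\<lambda>x. kJoin K Y Z g (cCmp K Y Y Z x f)) (cCmp K Y Y Z g (kStar K Y f))" by (rule kk_L[OF KK])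
  have R: "\<And>X Y f h. f \<in> cHom K Y Y \<Longrightarrow> h \<in> cHom K X Y \<Longrightarrow>
        least_prefixpoint K X Y (\<lambda>x. kJoin K X Y h (cCmp K X Y Y f x)) (cCmp K X Y Y (kStar K Y f) h)" by (rule kk_R[OF KK])
  have antisym: "\<And>X Y x y. x \<in> cHom K X Y \<Longrightarrow> y \<in> cHom K X Y \<Longrightarrow> kk_le K X Y x y \<Longrightarrow> kk_le K X Y y x \<Longrightarrow> x = y"
    unfolding kk_le_def using jc by metis
  have monol: "\<And>X Y Z x y f. f \<in> cHom K X Y \<Longrightarrow> x \<in> cHom K Y Z \<Longrightarrow> y \<in> cHom K Y Z \<Longrightarrow> kk_le K Y Z x y \<Longrightarrow>
      kk_le K X Z (cCmp K X Y Z x f) (cCmp K X Y Z y f)"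
    unfolding kk_le_def using jl by metis
  have monor: "\<And>X Y Z x y g. g \<in> cHom K Y Z \<Longrightarrow> x \<in> cHom K X Y \<Longrightarrow> y \<in> cHom K X Y \<Longrightarrow> kk_le K X Y x y \<Longrightarrow>
      kk_le K X Z (cCmp K X Y Z g x) (cCmp K X Y Z g y)"
    unfolding kk_le_def using jr by metis
  have k1: "kk_le K B B (kJoin K B B (cId K B) (cCmp K B B B (kStar K B k) k)) (kStar K B k)"
    using L[OF k idh[of B]] sh[OF k] idl unfolding least_prefixpoint_def by (metis idl)
  have s1: "kk_le K A A (kJoin K A A (cId K A) (cCmp K A A A s (kStar K A s))) (kStar K A s)"
    using R[OF s idh[of A]] sh[OF s] idr unfolding least_prefixpoint_def by (metis idr)
  let ?p = "cCmp K A A B a (kStar K A s)" and ?q = "cCmp K A B B (kStar K B k) a"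
  have ph: "?p \<in> cHom K A B" using cmph a sh s by blast
  have qh: "?q \<in> cHom K A B" using cmph a sh k by blast
  have "kk_le K A B ?p ?q"
  proof -
    have e: "kJoin K A B a (cCmp K A A B ?q s) =
        cCmp K A B B (kJoin K B B (cId K B) (cCmp K B B B (kStar K B k) k)) a"
    proof -
      have "cCmp K A A B ?q s = cCmp K A B B (kStar K B k) (cCmp K A A B a s)"
        using assoc[OF s a sh[OF k]] by simp
      also have "\<dots> = cCmp K A B B (cCmp K B B B (kStar K B k) k) a"
        unfolding comm using assoc[OF a k sh[OF k]] by simp
      finally show ?thesis using jl[OF a idh[of B] cmph[OF k sh[OF k]]] idl[OF a] by simp
    qed
    have "kk_le K A B (kJoin K A B a (cCmp K A A B ?q s)) ?q"
      unfolding e by (rule monol[OF a _ sh[OF k] k1]) (use jh idh cmph k sh in blast)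
    then show ?thesis using L[OF s a] qh unfolding least_prefixpoint_def by blast
  qed
  moreover have "kk_le K A B ?q ?p"
  proof -
    have e: "kJoin K A B a (cCmp K A B B k ?p) =
        cCmp K A A B a (kJoin K A A (cId K A) (cCmp K A A A s (kStar K A s)))"
    proof -
      have "cCmp K A B B k ?p = cCmp K A A B (cCmp K A A B a s) (kStar K A s)"
        unfolding comm using assoc[OF sh[OF s] a k] by simp
      also have "\<dots> = cCmp K A A B a (cCmp K A A A s (kStar K A s))"
        using assoc[OF sh[OF s] s a] by simp
      finally show ?thesis using jr[OF idh[of A] cmph[OF sh[OF s] s] a] idr[OF a] by simp
    qed
    have "kk_le K A B (kJoin K A B a (cCmp K A B B k ?p)) ?p"
      unfolding e by (rule monor[OF a _ sh[OF s] s1]) (use jh idh cmph s sh in blast)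
    then show ?thesis using R[OF k a] ph unfolding least_prefixpoint_def by blast
  qed
  ultimately show ?thesis using antisym ph qh by blast
qed




context wr begin

lemma writer_kk:
  assumes KK: "is_kk_category (kleisli_kk C T eta ext J B St)"
    and sr: "strength_respects_kleene C P T tau J B St"
  shows "kleene_monad C (wrT P T M) (wrEta C P T eta M e) (wrExt C P T eta ext tau M m)
          (wrJoin P J M) (wrBot P B M) (wrStar C P T eta ext tau St M e m)"
proof -
  note kb = kk_basic[OF KK]
  have extJ: "\<And>X Y Z f g h. f \<in> hom X (T Y) \<Longrightarrow> g \<in> hom X (T Y) \<Longrightarrow> h \<in> hom Y (T Z) \<Longrightarrow>
     cmp X (T Y) (T Z) (ext Y Z h) (J X Y f g) = J X Z (cmp X (T Y) (T Z) (ext Y Z h) f) (cmp X (T Y) (T Z) (ext Y Z h) g)"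
    using kk_jr[OF KK] unfolding kleisli_kk_def by simp
  have extB: "\<And>X Y Z h. h \<in> hom Y (T Z) \<Longrightarrow> cmp X (T Y) (T Z) (ext Y Z h) (B X Y) = B X Z"
    using kk_br[OF KK] unfolding kleisli_kk_def by simp
  have srJ: "\<And>X Y Y' f g. f \<in> hom Y (T Y') \<Longrightarrow> g \<in> hom Y (T Y') \<Longrightarrow>
        cmp (prd X Y) (prd X (T Y')) (T (prd X Y'))
          (tau X Y') (crs X Y X (T Y') (idm X) (J Y Y' f g))
        = J (prd X Y) (prd X Y')
            (cmp (prd X Y) (prd X (T Y')) (T (prd X Y'))
               (tau X Y') (crs X Y X (T Y') (idm X) f))
            (cmp (prd X Y) (prd X (T Y')) (T (prd X Y'))
               (tau X Y') (crs X Y X (T Y') (idm X) g))"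
    using sr unfolding strength_respects_kleene_def by blast
  have srB: "\<And>X Y Y'. cmp (prd X Y) (prd X (T Y')) (T (prd X Y'))
          (tau X Y') (crs X Y X (T Y') (idm X) (B Y Y'))
        = B (prd X Y) (prd X Y')"
    using sr unfolding strength_respects_kleene_def by blast
  have srS: "\<And>X Y k. k \<in> hom Y (T Y) \<Longrightarrow>
        cmp (prd X Y) (prd X (T Y)) (T (prd X Y))
          (tau X Y) (crs X Y X (T Y) (idm X) (St Y k))
        = St (prd X Y)
            (cmp (prd X Y) (prd X (T Y)) (T (prd X Y))
               (tau X Y) (crs X Y X (T Y) (idm X) k))"
    using sr unfolding strength_respects_kleene_def by blast

  have circJ: "circ X Y (J X (prd M Y) f g) = J (prd M X) (prd M Y) (circ X Y f) (circ X Y g)"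
    if "f \<in> hom X (T (prd M Y))" "g \<in> hom X (T (prd M Y))" for X Y f g
    using that kb by (simp add: circ_alt srJ extJ)
  have circB: "circ X Y (B X (prd M Y)) = B (prd M X) (prd M Y)" for X Y
    using kb by (simp add: circ_alt srB extB)
  have wrEta_eq: "wrEta C P T eta M e X = cmp X (prd M X) (T (prd M X)) (eta (prd M X)) (uu X)" for X
    unfolding wrEta_def ..
  have wrStar_eq: "wrStar C P T eta ext tau St M e m X f = cmp X (prd M X) (T (prd M X)) (St (prd M X) (circ X X f)) (uu X)"
    if "f \<in> hom X (T (prd M X))" for X f
    using that kb unfolding wrStar_def wrEta_eq by simp
  have circS: "circ X X (wrStar C P T eta ext tau St M e m X f) = St (prd M X) (circ X X f)"
    if f: "f \<in> hom X (T (prd M X))" for X f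
  proof -
    let ?k = "circ X X f"
    let ?A = "prd M (prd M X)" and ?B = "prd M X"
    let ?s = "cmp ?A (prd M (T ?B)) (T (prd M ?B)) (tau M ?B) (crs M ?B M (T ?B) (idm M) ?k)"
    let ?a = "cmp ?A ?B (T ?B) (eta ?B) (mu X)"
    have kh: "?k \<in> hom ?B (T ?B)" using f by simp
    have sh: "?s \<in> hom ?A (T ?A)" using kh by simp
    have comm: "cmp ?A (T ?A) (T ?B) (ext ?A ?B ?a) ?s = cmp ?A (T ?B) (T ?B) (ext ?B ?B ?k) ?a"
      using circ_circ[OF f] circ_alt[OF kh] kh by simp
    have C1: "cmp ?A (T ?A) (T ?B) (ext ?A ?B ?a) (St ?A ?s) = cmp ?A (T ?B) (T ?B) (ext ?B ?B (St ?B ?k)) ?a"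
      using kk_commute[OF KK, of ?a ?A ?B ?s ?k] comm kh sh unfolding kleisli_kk_def by simp
    have C2: "cmp ?A (T ?A) (T ?B) (ext ?A ?B ?a) (St ?A ?s) = cmp ?A ?B (T ?B) (St ?B ?k) (mu X)"
      using C1 kh kb by simp
    have Sk: "St ?B ?k \<in> hom ?B (T ?B)" using kh kb by simp
    have Ss: "St ?A ?s \<in> hom ?A (T ?A)" using sh kb by simp
    have "circ X X (wrStar C P T eta ext tau St M e m X f) =
       cmp ?B (T ?A) (T ?B) (ext ?A ?B ?a) (cmp ?B (prd M (T ?B)) (T ?A) (tau M ?B)
          (cmp ?B ?A (prd M (T ?B)) (crs M ?B M (T ?B) (idm M) (St ?B ?k)) (crs M X M ?B (idm M) (uu X))))"
      unfolding wrStar_eq[OF f] using Sk by (simp add: circ_alt)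
    also have "\<dots> = cmp ?B (T ?A) (T ?B) (ext ?A ?B ?a) (cmp ?B ?A (T ?A) (St ?A ?s) (crs M X M ?B (idm M) (uu X)))"
      using Sk kh by (subst fold2[OF srS]) simp_all
    also have "\<dots> = cmp ?B ?A (T ?B) (cmp ?A ?B (T ?B) (St ?B ?k) (mu X)) (crs M X M ?B (idm M) (uu X))"
      using Ss Sk by (subst fold2[OF C2]) simp_all
    also have "\<dots> = St ?B ?k" using Sk by simp
    finally show ?thesis .
  qed

  have wkt: "is_kleisli_triple C (wrT P T M) (wrEta C P T eta M e) (wrExt C P T eta ext tau M m)"
    unfolding is_kleisli_triple_def wrT_def wrExt_def wrEta_eq
  proof (intro conjI allI impI)
    fix X show "cmp X (prd M X) (T (prd M X)) (eta (prd M X)) (uu X) \<in> hom X (T (prd M X))" by simp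
  next
    fix X Y f assume "f \<in> hom X (T (prd M Y))"
    then show "ext (prd M X) (prd M Y) (circ X Y f) \<in> hom (T (prd M X)) (T (prd M Y))" by simp
  next
    fix X show "ext (prd M X) (prd M X) (circ X X (cmp X (prd M X) (T (prd M X)) (eta (prd M X)) (uu X))) = idm (T (prd M X))"
      by (simp add: circ_eta)
  next
    fix X Y f assume f: "f \<in> hom X (T (prd M Y))"
    show "cmp X (T (prd M X)) (T (prd M Y)) (ext (prd M X) (prd M Y) (circ X Y f)) (cmp X (prd M X) (T (prd M X)) (eta (prd M X)) (uu X)) = f"
      using f by (simp add: circ_unit)
  next
    fix X Y Z f g assume f: "f \<in> hom X (T (prd M Y))" and g: "g \<in> hom Y (T (prd M Z))"
    show "ext (prd M X) (prd M Z) (circ X Z (cmp X (T (prd M Y)) (T (prd M Z)) (ext (prd M Y) (prd M Z) (circ Y Z g)) f)) =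
      cmp (T (prd M X)) (T (prd M Y)) (T (prd M Z)) (ext (prd M Y) (prd M Z) (circ Y Z g)) (ext (prd M X) (prd M Y) (circ X Y f))"
      using f g by (simp add: circ_ext)
  qed

  show ?thesis
    unfolding kleene_monad_def
  proof (intro conjI cat wkt)
    show "is_kk_category (kleisli_kk C (wrT P T M) (wrEta C P T eta M e) (wrExt C P T eta ext tau M m)
          (wrJoin P J M) (wrBot P B M) (wrStar C P T eta ext tau St M e m))"
      apply (rule kk_transfer[OF KK, where F = "\<lambda>X. prd M X" and \<Phi> = "\<lambda>X Y. circ X Y"])
      subgoal by (simp add: kleisli_kk_def wrT_def)
      subgoal for X Y f g
        apply (simp add: kleisli_kk_def wrT_def)
        apply (metis circ_unit)
        done
      subgoal by (simp add: kleisli_kk_def wrT_def wrEta_eq)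
      subgoal by (simp add: kleisli_kk_def wrT_def wrEta_eq circ_eta)
      subgoal by (simp add: kleisli_kk_def wrT_def wrExt_def)
      subgoal by (simp add: kleisli_kk_def wrT_def wrExt_def circ_ext)
      subgoal by (simp add: kleisli_kk_def wrT_def wrJoin_def kb)
      subgoal by (simp add: kleisli_kk_def wrT_def wrJoin_def circJ)
      subgoal by (simp add: kleisli_kk_def wrT_def wrBot_def kb)
      subgoal by (simp add: kleisli_kk_def wrT_def wrBot_def circB)
      subgoal by (simp add: kleisli_kk_def wrT_def wrStar_eq kb)
      subgoal by (simp add: kleisli_kk_def wrT_def circS)
      done
  qed
qed

end


theorem proposition3:
  fixes C :: "('o, 'a) cat"
    and T :: "'o \<Rightarrow> 'o" and eta :: "'o \<Rightarrow> 'a" and ext :: "'o \<Rightarrow> 'o \<Rightarrow> 'a \<Rightarrow> 'a"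
    and J :: "'o \<Rightarrow> 'o \<Rightarrow> 'a \<Rightarrow> 'a \<Rightarrow> 'a" and B :: "'o \<Rightarrow> 'o \<Rightarrow> 'a" and St :: "'o \<Rightarrow> 'a \<Rightarrow> 'a"
  assumes KM: "kleene_monad C T eta ext J B St"
  shows
    "(\<forall>(P :: ('o, 'a) cart) (E :: ('o, 'a) expo) (S :: 'o).
        is_ccc C P E \<longrightarrow>
        kleene_monad C (stT P E T S) (stEta P E T eta S) (stExt C P E T ext S)
          (stJoin C P E T J S) (stBot P E T B S) (stStar C P E T St S))
   \<and>
     (\<forall>(P :: ('o, 'a) cart) (tau :: 'o \<Rightarrow> 'o \<Rightarrow> 'a) (M :: 'o) (e :: 'a) (m :: 'a).
        has_finite_products C P \<longrightarrow>
        is_strength C P T eta ext tau \<longrightarrow>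
        is_monoid_object C P M e m \<longrightarrow>
        strength_respects_kleene C P T tau J B St \<longrightarrow>
        kleene_monad C (wrT P T M) (wrEta C P T eta M e) (wrExt C P T eta ext tau M m)
          (wrJoin P J M) (wrBot P B M) (wrStar C P T eta ext tau St M e m))"
proof -
  have cat: "is_category C" and kt: "is_kleisli_triple C T eta ext"
    and KK: "is_kk_category (kleisli_kk C T eta ext J B St)"
    using KM unfolding kleene_monad_def by auto
  show ?thesis
  proof (intro conjI allI impI)
    fix P :: "('o, 'a) cart" and E :: "('o, 'a) expo" and S :: 'o
    assume "is_ccc C P E"
    then show "kleene_monad C (stT P E T S) (stEta P E T eta S) (stExt C P E T ext S)
          (stJoin C P E T J S) (stBot P E T B S) (stStar C P E T St S)"
      by (rule state_part[OF KM])
  next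
    fix P :: "('o, 'a) cart" and tau :: "'o \<Rightarrow> 'o \<Rightarrow> 'a" and M :: 'o and e :: 'a and m :: 'a
    assume fp: "has_finite_products C P" and st: "is_strength C P T eta ext tau"
      and mo: "is_monoid_object C P M e m" and sr: "strength_respects_kleene C P T tau J B St"
    interpret wr C P T eta ext tau M e m
      by unfold_locales (use cat fp kt st mo in auto)
    show "kleene_monad C (wrT P T M) (wrEta C P T eta M e) (wrExt C P T eta ext tau M m)
          (wrJoin P J M) (wrBot P B M) (wrStar C P T eta ext tau St M e m)"
      by (rule writer_kk[OF KK sr])
  qed
qed

end
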